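(* With the multiplication $m$, comultiplication $\mu$, unit and counit $\varepsilon$ described in the context, $dWHA$ is a connected graded bialgebra over $\mathbf{Z}$: $m$ is associative with unit the empty substitution, $\mu$ is coassociative with counit $\varepsilon$, all structure maps respect the grading, and $\mu$ is an algebra morphism, i.e. $\mu\circ m=(m\otimes m)\circ(\mathrm{id}\otimes \mathrm{tw}\otimes \mathrm{id})\circ(\mu\otimes\mu)$, where $\mathrm{tw}(a\otimes b)=b\otimes a$. Consequently $dWHA$ is a Hopf algebra.
   Context: Words are finite sequences of letters; $*$ denotes concatenation; the support $\mathrm{supp}(\alpha)$ of a word is the set of letters occurring in it. The shuffle product $\alpha\times_{sh}\beta$ of words $\alpha=[c_1,\dots,c_p]$, $\beta=[d_1,\dots,d_q]$ is the sum, with multiplicities, over all ways of choosing $p$ of the $p+q$ positions, of the word obtained by placing the $c$'s in their original order in the chosen positions and the $d$'s in their original order in the remaining ones. A subword of $[a_1,\dots,a_m]$ is a word $[a_{i_1},\dots,a_{i_r}]$ with $i_1<\dots<i_r$. Definition of $dWHA$: Let $\mathcal X$ be a countably infinite alphabet. A substitution is a pair $p=\binom{\rho}{\sigma}$ of words over $\mathcal X$ with $\mathrm{supp}(\rho)=\mathrm{supp}(\sigma)$, considered up to simultaneously renaming the letters of both words by a bijection of $\mathcal X$. $dWHA$ is the free abelian group with basis all substitutions (including the empty substitution $\binom{[\,]}{[\,]}$), graded by $\deg(p)=\#\mathrm{supp}(\rho)$. Multiplication: for substitutions $p=\binom{\rho}{\sigma}$, $p'=\binom{\rho'}{\sigma'}$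 written with $\mathrm{supp}(\rho)\cap\mathrm{supp}(\rho')=\emptyset$, $m(p\otimes p')=\binom{\rho*\rho'}{\sigma\times_{sh}\sigma'}$, meaning the sum of $\binom{\rho*\rho'}{\gamma}$ over the terms $\gamma$ (with multiplicity) of $\sigma\times_{sh}\sigma'$. The unit is the empty substitution. A good cut of a word $\sigma$ is a factorization $\sigma=\sigma_1*\sigma_2$ with $\mathrm{supp}(\sigma_1)\cap\mathrm{supp}(\sigma_2)=\emptyset$ (the two trivial cuts included). Comultiplication: $\mu(p)=\sum \binom{p^{-1}(\sigma_1)}{\sigma_1}\otimes\binom{p^{-1}(\sigma_2)}{\sigma_2}$, summed over all good cuts $\sigma=\sigma_1*\sigma_2$, where $p^{-1}(\sigma_i)$ is the subword of $\rho$ consisting of all occurrences in $\rho$ of letters of $\mathrm{supp}(\sigma_i)$. Counit: $\varepsilon$ is $1$ on the empty substitution and $0$ on all other substitutions. *)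

theory Defs
  imports "HOL-Library.Poly_Mapping"
begin

text \<open>Substitutions are
taken up to simultaneous bijective renaming of letters; we represent each class by its
canonical representative, obtained by renaming the letters in order of their first
occurrence in rho to 0, 1, 2, ...\<close>

type_synonym word = "nat list"
type_synonym subst = "word \<times> word"

definition valid :: "subst \<Rightarrow> bool" where
  "valid p \<longleftrightarrow> set (fst p) = set (snd p)"

definition rn :: "word \<Rightarrow> nat \<Rightarrow> nat" where
  "rn \<rho> a = card (set (takeWhile (\<lambda>b. b \<noteq> a) \<rho>))"

definition std :: "subst \<Rightarrow> subst" where
  "std p = (map (rn (fst p)) (fst p), map (rn (fst p)) (snd p))"

definition Canon :: "subst set" where
  "Canon = {p. valid p \<and> std p = p}"

definition empty_subst :: subst where
  "empty_subst = ([], [])"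

definition deg :: "subst \<Rightarrow> nat" where
  "deg p = card (set (fst p))"

text \<open>dWHA = free abelian group on Canon; its tensor square is free on Canon x Canon.\<close>
definition dWHA :: "(subst \<Rightarrow>\<^sub>0 int) set" where
  "dWHA = {x. Poly_Mapping.keys x \<subseteq> Canon}"

definition dWHA2 :: "(subst \<times> subst \<Rightarrow>\<^sub>0 int) set" where
  "dWHA2 = {x. Poly_Mapping.keys x \<subseteq> Canon \<times> Canon}"

fun shuffle :: "'a list \<Rightarrow> 'a list \<Rightarrow> 'a list list" where
  "shuffle [] ys = [ys]"
| "shuffle xs [] = [xs]"
| "shuffle (x # xs) (y # ys) =
     map ((#) x) (shuffle xs (y # ys)) @ map ((#) y) (shuffle (x # xs) ys)"

text \<open>Product of two basis elements: rename to make the supports disjoint, then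
(rho * rho', sigma shuffle sigma').\<close>
definition mult_basis :: "subst \<Rightarrow> subst \<Rightarrow> subst \<Rightarrow>\<^sub>0 int" where
  "mult_basis p q =
     (let (\<rho>, \<sigma>) = std p; (\<rho>', \<sigma>') = std q; k = deg (\<rho>, \<sigma>);
          \<rho>'' = map ((+) k) \<rho>'; \<sigma>'' = map ((+) k) \<sigma>'
      in sum_list (map (\<lambda>\<gamma>. frag_of (std (\<rho> @ \<rho>'', \<gamma>))) (shuffle \<sigma> \<sigma>'')))"

definition comult_basis :: "subst \<Rightarrow> (subst \<times> subst) \<Rightarrow>\<^sub>0 int" where
  "comult_basis p =
     sum_list (map (\<lambda>i. let s1 = take i (snd p); s2 = drop i (snd p) in
        if set s1 \<inter> set s2 = {}
        then frag_of (std (filter (\<lambda>a. a \<in> set s1) (fst p), s1),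
                      std (filter (\<lambda>a. a \<in> set s2) (fst p), s2))
        else 0) [0..<Suc (length (snd p))])"

definition tensor :: "('a \<Rightarrow>\<^sub>0 int) \<Rightarrow> ('b \<Rightarrow>\<^sub>0 int) \<Rightarrow> ('a \<times> 'b) \<Rightarrow>\<^sub>0 int" where
  "tensor x y = frag_extend (\<lambda>a. frag_extend (\<lambda>b. frag_of (a, b)) y) x"

definition tmap :: "(('a \<Rightarrow>\<^sub>0 int) \<Rightarrow> ('c \<Rightarrow>\<^sub>0 int)) \<Rightarrow> (('b \<Rightarrow>\<^sub>0 int) \<Rightarrow> ('d \<Rightarrow>\<^sub>0 int))
     \<Rightarrow> (('a \<times> 'b) \<Rightarrow>\<^sub>0 int) \<Rightarrow> ('c \<times> 'd) \<Rightarrow>\<^sub>0 int" where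
  "tmap f g z = frag_extend (\<lambda>(a, b). tensor (f (frag_of a)) (g (frag_of b))) z"

definition mult :: "((subst \<times> subst) \<Rightarrow>\<^sub>0 int) \<Rightarrow> subst \<Rightarrow>\<^sub>0 int" where
  "mult z = frag_extend (\<lambda>(p, q). mult_basis p q) z"

definition comult :: "(subst \<Rightarrow>\<^sub>0 int) \<Rightarrow> (subst \<times> subst) \<Rightarrow>\<^sub>0 int" where
  "comult x = frag_extend comult_basis x"

definition unit :: "int \<Rightarrow> subst \<Rightarrow>\<^sub>0 int" where
  "unit c = frag_cmul c (frag_of empty_subst)"

definition counit :: "(subst \<Rightarrow>\<^sub>0 int) \<Rightarrow> int" where
  "counit x = Poly_Mapping.lookup x empty_subst"

text \<open>(eps (x) id) and (id (x) eps), composed with the identifications Z (x) A = A = A (x) Z.\<close>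
definition lcounit :: "((subst \<times> subst) \<Rightarrow>\<^sub>0 int) \<Rightarrow> subst \<Rightarrow>\<^sub>0 int" where
  "lcounit z = frag_extend (\<lambda>(a, b). frag_cmul (counit (frag_of a)) (frag_of b)) z"

definition rcounit :: "((subst \<times> subst) \<Rightarrow>\<^sub>0 int) \<Rightarrow> subst \<Rightarrow>\<^sub>0 int" where
  "rcounit z = frag_extend (\<lambda>(a, b). frag_cmul (counit (frag_of b)) (frag_of a)) z"

definition tassoc :: "((('a \<times> 'b) \<times> 'c) \<Rightarrow>\<^sub>0 int) \<Rightarrow> ('a \<times> ('b \<times> 'c)) \<Rightarrow>\<^sub>0 int" where
  "tassoc z = frag_extend (\<lambda>((a, b), c). frag_of (a, (b, c))) z"

text \<open>id (x) tw (x) id.\<close>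
definition midtw :: "((('a \<times> 'b) \<times> ('c \<times> 'd)) \<Rightarrow>\<^sub>0 int) \<Rightarrow> (('a \<times> 'c) \<times> ('b \<times> 'd)) \<Rightarrow>\<^sub>0 int" where
  "midtw z = frag_extend (\<lambda>((a, b), (c, d)). frag_of ((a, c), (b, d))) z"

end

theory Submission
  imports "HOL-Library.Multiset" Defs
begin


lemma frag_ind[case_names zero one diff]:
  assumes "P 0" "\<And>x. P (frag_of x)" "\<And>a b. P a \<Longrightarrow> P b \<Longrightarrow> P (a - b)"
  shows "P c"
  using subset_UNIV[of "Poly_Mapping.keys c"] by (induction c rule: frag_induction) (use assms in auto)

lemma frag_extend_sum_list:
  "frag_extend f (sum_list xs) = sum_list (map (frag_extend f) xs)"
  by (induction xs) (simp_all add: frag_extend_add)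

lemma frag_extend_frag_extend:
  "frag_extend g (frag_extend f x) = frag_extend (\<lambda>a. frag_extend g (f a)) x"
  by (induction x rule: frag_ind) (auto simp: frag_extend_diff)

lemma frag_extend_diff_fun:
  "frag_extend (\<lambda>x. g x - h x) c = frag_extend g c - frag_extend h c"
  by (induction c rule: frag_ind) (auto simp: frag_extend_diff)

lemma frag_extend_add_fun:
  "frag_extend (\<lambda>x. g x + h x) c = frag_extend g c + frag_extend h c"
  by (induction c rule: frag_ind) (auto simp: frag_extend_diff)

lemma frag_extend_zero_fun[simp]:
  "frag_extend (\<lambda>x. 0) c = 0"
  by (simp add: frag_extend_eq_0)

lemma frag_extend_swap:
  "frag_extend (\<lambda>a. frag_extend (\<lambda>b. h a b) y) x = frag_extend (\<lambda>b. frag_extend (\<lambda>a. h a b) x) y"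
  by (induction x rule: frag_ind) (auto simp: frag_extend_diff frag_extend_diff_fun)

lemma frag_extend_frag_of_id[simp]: "frag_extend frag_of x = x"
  using frag_expansion by metis

lemma frag_extend_cong_keys:
  "(\<And>a. a \<in> Poly_Mapping.keys x \<Longrightarrow> f a = g a) \<Longrightarrow> frag_extend f x = frag_extend g x"
  by (rule frag_extend_eq)

lemma keys_sum_list:
  "Poly_Mapping.keys (sum_list xs) \<subseteq> (\<Union>x\<in>set xs. Poly_Mapping.keys x)"
proof (induction xs)
  case (Cons a xs)
  then show ?case using Poly_Mapping.keys_add[of a "sum_list xs"] by auto
qed auto

lemma frag_extend_keys_sub:
  assumes "\<And>a. a \<in> Poly_Mapping.keys x \<Longrightarrow> Poly_Mapping.keys (f a) \<subseteq> S"
  shows "Poly_Mapping.keys (frag_extend f x) \<subseteq> S"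
  using keys_frag_extend[of f x] assms by blast

lemma keys_tensor: "Poly_Mapping.keys (tensor x y) \<subseteq> Poly_Mapping.keys x \<times> Poly_Mapping.keys y"
  unfolding tensor_def
  by (rule frag_extend_keys_sub, rule frag_extend_keys_sub) (auto simp: keys_frag_of)

lemma tensor_of_of[simp]: "tensor (frag_of a) (frag_of b) = frag_of (a, b)"
  by (simp add: tensor_def)

lemma tensor_diff1: "tensor (x - y) z = tensor x z - tensor y z"
  by (simp add: tensor_def frag_extend_diff)
lemma tensor_add1: "tensor (x + y) z = tensor x z + tensor y z"
  by (simp add: tensor_def frag_extend_add)
lemma tensor_zero1[simp]: "tensor 0 z = 0"
  by (simp add: tensor_def)
lemma tensor_diff2: "tensor z (x - y) = tensor z x - tensor z y"
  unfolding tensor_def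
  by (induction z rule: frag_ind) (auto simp: frag_extend_diff)
lemma tensor_add2: "tensor z (x + y) = tensor z x + tensor z y"
  unfolding tensor_def
  by (induction z rule: frag_ind) (auto simp: frag_extend_diff frag_extend_add)
lemma tensor_zero2[simp]: "tensor z 0 = 0"
  by (simp add: tensor_def frag_extend_eq_0)

lemma tensor_frag_of1: "tensor (frag_of a) y = frag_extend (\<lambda>b. frag_of (a, b)) y"
  by (simp add: tensor_def)

lemma tensor_frag_of2: "tensor x (frag_of b) = frag_extend (\<lambda>a. frag_of (a, b)) x"
  by (simp add: tensor_def)

lemma tensor_expand: "tensor x y = frag_extend (\<lambda>a. frag_extend (\<lambda>b. frag_of (a, b)) y) x"
  by (simp add: tensor_def)

lemma frag_extend_tensor:
  "frag_extend h (tensor x y) = frag_extend (\<lambda>a. frag_extend (\<lambda>b. h (a, b)) y) x"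
  unfolding tensor_def frag_extend_frag_extend by simp

lemma tensor_frag_extend1:
  "tensor (frag_extend f x) y = frag_extend (\<lambda>a. tensor (f a) y) x"
  unfolding tensor_def frag_extend_frag_extend by simp

lemma tensor_frag_extend2:
  "tensor x (frag_extend f y) = frag_extend (\<lambda>b. tensor x (f b)) y"
proof -
  have "tensor x (frag_extend f y) = frag_extend (\<lambda>a. frag_extend (\<lambda>b. frag_extend (\<lambda>c. frag_of (a, c)) (f b)) y) x"
    unfolding tensor_def frag_extend_frag_extend by simp
  also have "\<dots> = frag_extend (\<lambda>b. tensor x (f b)) y"
    unfolding tensor_def by (rule frag_extend_swap)
  finally show ?thesis .
qed

lemma tensor_sum_list1: "tensor (sum_list xs) y = sum_list (map (\<lambda>x. tensor x y) xs)"
  by (induction xs) (simp_all add: tensor_add1)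
lemma tensor_sum_list2: "tensor y (sum_list xs) = sum_list (map (\<lambda>x. tensor y x) xs)"
  by (induction xs) (simp_all add: tensor_add2)

lemma tmap_of[simp]: "tmap f g (frag_of (a, b)) = tensor (f (frag_of a)) (g (frag_of b))"
  by (simp add: tmap_def)



section \<open>Renaming and standardization\<close>

lemma takeWhile_set_sub: "set (takeWhile P xs) \<subseteq> set xs"
  by (meson set_takeWhileD subsetI)

lemma rn_lt: "a \<in> set \<rho> \<Longrightarrow> rn \<rho> a < card (set \<rho>)"
proof -
  assume a: "a \<in> set \<rho>"
  have "set (takeWhile (\<lambda>b. b \<noteq> a) \<rho>) \<subset> set \<rho>"
    using a takeWhile_set_sub[of "\<lambda>b. b \<noteq> a" \<rho>] by (auto dest: set_takeWhileD)
  then show ?thesis unfolding rn_def by (simp add: psubset_card_mono)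
qed

lemma rn_notin: "a \<notin> set \<rho> \<Longrightarrow> rn \<rho> a = card (set \<rho>)"
  unfolding rn_def by (subst takeWhile_eq_all_conv[THEN iffD2]) auto

lemma tw_prefix_sub:
  "a \<in> set (takeWhile (\<lambda>c. c \<noteq> b) \<rho>) \<Longrightarrow> set (takeWhile (\<lambda>c. c \<noteq> a) \<rho>) \<subseteq> set (takeWhile (\<lambda>c. c \<noteq> b) \<rho>)"
  by (induction \<rho>) auto

lemma tw_notin: "a \<notin> set (takeWhile (\<lambda>c. c \<noteq> a) \<rho>)"
  by (induction \<rho>) auto

lemma tw_dichotomy:
  "a \<in> set \<rho> \<Longrightarrow> b \<in> set \<rho> \<Longrightarrow> a \<noteq> b \<Longrightarrow>
   a \<in> set (takeWhile (\<lambda>c. c \<noteq> b) \<rho>) \<or> b \<in> set (takeWhile (\<lambda>c. c \<noteq> a) \<rho>)"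
  by (induction \<rho>) auto

lemma rn_less:
  assumes "a \<in> set (takeWhile (\<lambda>c. c \<noteq> b) \<rho>)"
  shows "rn \<rho> a < rn \<rho> b"
proof -
  have "set (takeWhile (\<lambda>c. c \<noteq> a) \<rho>) \<subset> set (takeWhile (\<lambda>c. c \<noteq> b) \<rho>)"
    using tw_prefix_sub[OF assms] tw_notin[of a \<rho>] assms by blast
  then show ?thesis unfolding rn_def by (simp add: psubset_card_mono)
qed

lemma rn_inj: "inj_on (rn \<rho>) (set \<rho>)"
proof (rule inj_onI, rule ccontr)
  fix a b assume "a \<in> set \<rho>" "b \<in> set \<rho>" "rn \<rho> a = rn \<rho> b" "a \<noteq> b"
  then show False using tw_dichotomy[of a \<rho> b] rn_less[of a b \<rho>] rn_less[of b a \<rho>] by auto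
qed

lemma tw_map:
  assumes "inj_on f (insert a (set \<rho>))"
  shows "takeWhile (\<lambda>c. c \<noteq> f a) (map f \<rho>) = map f (takeWhile (\<lambda>c. c \<noteq> a) \<rho>)"
  using assms by (induction \<rho>) (auto simp: inj_on_def)

lemma rn_map:
  assumes "inj_on f (insert a (set \<rho>))"
  shows "rn (map f \<rho>) (f a) = rn \<rho> a"
proof -
  have "inj_on f (set (takeWhile (\<lambda>c. c \<noteq> a) \<rho>))"
    using assms takeWhile_set_sub by (metis inj_on_subset subset_insertI2)
  then show ?thesis unfolding rn_def tw_map[OF assms] by (simp add: card_image)
qed

lemma std_map:
  assumes "inj_on f (set \<rho> \<union> set \<sigma>)"
  shows "std (map f \<rho>, map f \<sigma>) = std (\<rho>, \<sigma>)"
proof -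
  have "rn (map f \<rho>) (f a) = rn \<rho> a" if "a \<in> set \<rho> \<union> set \<sigma>" for a
    by (rule rn_map, rule inj_on_subset[OF assms]) (use that in auto)
  then show ?thesis unfolding std_def by auto
qed

lemma std_map': "inj_on f (set \<rho> \<union> set \<sigma>) \<Longrightarrow> std (map f \<rho>, map f \<sigma>) = std (\<rho>, \<sigma>)"
  by (rule std_map)

lemma valid_std: "valid p \<Longrightarrow> valid (std p)"
  unfolding valid_def std_def by auto

lemma std_std: "valid p \<Longrightarrow> std (std p) = std p"
proof -
  assume v: "valid p"
  obtain \<rho> \<sigma> where p: "p = (\<rho>, \<sigma>)" by force
  have "std (std p) = std (map (rn \<rho>) \<rho>, map (rn \<rho>) \<sigma>)" by (simp add: p std_def)
  also have "\<dots> = std p" using v rn_inj[of \<rho>] by (subst std_map) (auto simp: p valid_def)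
  finally show ?thesis .
qed

lemma std_Canon: "valid p \<Longrightarrow> std p \<in> Canon"
  by (simp add: Canon_def valid_std std_std)

lemma Canon_std: "p \<in> Canon \<Longrightarrow> std p = p"
  by (simp add: Canon_def)

lemma Canon_valid: "p \<in> Canon \<Longrightarrow> valid p"
  by (simp add: Canon_def)

lemma deg_std: "valid p \<Longrightarrow> deg (std p) = deg p"
  unfolding deg_def std_def using rn_inj by (simp add: card_image)

lemma Canon_lt: "p \<in> Canon \<Longrightarrow> a \<in> set (fst p) \<Longrightarrow> a < deg p"
proof -
  assume c: "p \<in> Canon" and a: "a \<in> set (fst p)"
  have "std p = p" using c by (simp add: Canon_def)
  then have "fst p = map (rn (fst p)) (fst p)" unfolding std_def
    by (metis fst_conv)
  then obtain b where "b \<in> set (fst p)" "a = rn (fst p) b"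
    using a by (metis imageE list.set_map)
  then show ?thesis using rn_lt unfolding deg_def by auto
qed

lemma empty_Canon: "empty_subst \<in> Canon"
  by (simp add: Canon_def empty_subst_def valid_def std_def)

lemma deg_empty: "deg empty_subst = 0"
  by (simp add: deg_def empty_subst_def)

lemma Canon_deg0: "{p \<in> Canon. deg p = 0} = {empty_subst}"
proof -
  have "p = empty_subst" if "p \<in> Canon" "deg p = 0" for p
    using that unfolding Canon_def deg_def valid_def empty_subst_def
    by (cases p) auto
  then show ?thesis using empty_Canon deg_empty by auto
qed

lemma shuffle_Nil2[simp]: "shuffle xs [] = [xs]"
  by (cases xs) auto

lemma shuffle_map: "shuffle (map f xs) (map f ys) = map (map f) (shuffle xs ys)"
  by (induction xs ys rule: shuffle.induct) auto

lemma shuffle_set: "\<gamma> \<in> set (shuffle xs ys) \<Longrightarrow> set \<gamma> = set xs \<union> set ys"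
  by (induction xs ys arbitrary: \<gamma> rule: shuffle.induct) auto

lemma shuffle_length: "\<gamma> \<in> set (shuffle xs ys) \<Longrightarrow> length \<gamma> = length xs + length ys"
  by (induction xs ys arbitrary: \<gamma> rule: shuffle.induct) auto



section \<open>Shuffle combinatorics\<close>

lemma mset_concat_map: "mset (concat (map f L)) = (\<Sum>g\<in>#mset L. mset (f g))"
  by (induction L) auto

lemma image_mset_sum_mset_gen: "image_mset h (\<Sum>x\<in>#M. F x) = (\<Sum>x\<in>#M. image_mset h (F x))"
  by (induction M) auto

lemma sum_mset_image_comp: "(\<Sum>x\<in>#image_mset g M. F x) = (\<Sum>x\<in>#M. F (g x))"
  by (induction M) auto

lemma sum_mset_add_fun: "(\<Sum>x\<in>#M. F x + G x) = (\<Sum>x\<in>#M. F x) + (\<Sum>x\<in>#M. G x)"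
  by (induction M) (auto simp: ac_simps)

lemma mset_shuffle_cons:
  "mset (shuffle (x # xs) (y # ys)) = image_mset ((#) x) (mset (shuffle xs (y # ys))) + image_mset ((#) y) (mset (shuffle (x # xs) ys))"
  by simp

definition MA :: "'a list \<Rightarrow> 'a list \<Rightarrow> 'a list \<Rightarrow> 'a list multiset" where
  "MA xs ys zs = (\<Sum>g\<in>#mset (shuffle xs ys). mset (shuffle g zs))"

definition MB :: "'a list \<Rightarrow> 'a list \<Rightarrow> 'a list \<Rightarrow> 'a list multiset" where
  "MB xs ys zs = (\<Sum>g\<in>#mset (shuffle ys zs). mset (shuffle xs g))"

lemma sum_mset_single: "(\<Sum>g\<in>#M. {#g#}) = M"
  by (induction M) auto

lemma MA_cons: "MA (x # xs) (y # ys) (z # zs) =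
   image_mset ((#) x) (MA xs (y # ys) (z # zs)) + image_mset ((#) y) (MA (x # xs) ys (z # zs))
   + image_mset ((#) z) (MA (x # xs) (y # ys) zs)"
  unfolding MA_def mset_shuffle_cons
  by (simp add: sum_mset_add_fun image_mset_sum_mset_gen sum_mset_image_comp ac_simps)

lemma MB_cons: "MB (x # xs) (y # ys) (z # zs) =
   image_mset ((#) x) (MB xs (y # ys) (z # zs)) + image_mset ((#) y) (MB (x # xs) ys (z # zs))
   + image_mset ((#) z) (MB (x # xs) (y # ys) zs)"
  unfolding MB_def mset_shuffle_cons
  by (simp add: sum_mset_add_fun image_mset_sum_mset_gen sum_mset_image_comp ac_simps)

lemma MA_eq_MB: "MA xs ys zs = MB xs ys zs"
proof (induction "length xs + length ys + length zs" arbitrary: xs ys zs rule: less_induct)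
  case less
  show ?case
  proof (cases "xs = [] \<or> ys = [] \<or> zs = []")
    case True
    then show ?thesis
    proof (elim disjE)
      assume "xs = []" then show ?thesis unfolding MA_def MB_def
        by (simp add: sum_mset_single)
    next
      assume "ys = []" then show ?thesis unfolding MA_def MB_def by simp
    next
      assume "zs = []" then show ?thesis unfolding MA_def MB_def
        by (simp add: sum_mset_single)
    qed
  next
    case False
    then obtain x xs' y ys' z zs' where e: "xs = x # xs'" "ys = y # ys'" "zs = z # zs'"
      by (meson neq_Nil_conv)
    show ?thesis unfolding e MA_cons MB_cons
      by (subst (1 2 3) less) (auto simp: e)
  qed
qed

lemma shuffle_assoc_mset:
  "mset (concat (map (\<lambda>g. shuffle g zs) (shuffle xs ys))) = mset (concat (map (\<lambda>g. shuffle xs g) (shuffle ys zs)))"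
  using MA_eq_MB[of xs ys zs] unfolding MA_def MB_def mset_concat_map .

definition cuts :: "'a list \<Rightarrow> ('a list \<times> 'a list) list" where
  "cuts g = map (\<lambda>i. (take i g, drop i g)) [0..<Suc (length g)]"

lemma cuts_Nil[simp]: "cuts [] = [([], [])]"
  by (simp add: cuts_def)

lemma cuts_Cons: "cuts (x # g) = ([], x # g) # map (\<lambda>ab. (x # fst ab, snd ab)) (cuts g)"
  unfolding cuts_def by (simp add: upt_conv_Cons map_Suc_upt[symmetric] del: upt_Suc)

lemma mset_cuts_Cons: "mset (cuts (x # g)) = add_mset ([], x # g) (image_mset (\<lambda>ab. (x # fst ab, snd ab)) (mset (cuts g)))"
  by (simp add: cuts_Cons)

definition PS :: "'a list \<Rightarrow> 'a list \<Rightarrow> 'a list \<Rightarrow> 'a list \<Rightarrow> ('a list \<times> 'a list) multiset" where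
  "PS a c b d = (\<Sum>g1\<in>#mset (shuffle a c). \<Sum>g2\<in>#mset (shuffle b d). {#(g1, g2)#})"

definition apx :: "'a \<Rightarrow> 'a list \<times> 'a list \<Rightarrow> 'a list \<times> 'a list" where
  "apx x ab = (x # fst ab, snd ab)"

lemma PS_cons_cons: "PS (x # a) (y # c) b d = image_mset (apx x) (PS a (y # c) b d) + image_mset (apx y) (PS (x # a) c b d)"
  unfolding PS_def mset_shuffle_cons
  by (simp add: sum_mset_image_comp image_mset_sum_mset_gen apx_def multiset.map_comp o_def)

lemma PS_nil_cons: "PS [] (y # c) b d = image_mset (apx y) (PS [] c b d)"
  unfolding PS_def by (simp add: image_mset_sum_mset_gen apx_def multiset.map_comp o_def)

lemma PS_cons_nil: "PS (x # a) [] b d = image_mset (apx x) (PS a [] b d)"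
  unfolding PS_def by (simp add: image_mset_sum_mset_gen apx_def multiset.map_comp o_def)

lemma PS_nil_nil: "PS [] [] b d = image_mset (\<lambda>g. ([], g)) (mset (shuffle b d))"
  unfolding PS_def by (induction "mset (shuffle b d)") auto

definition CL :: "'a list \<Rightarrow> 'a list \<Rightarrow> ('a list \<times> 'a list) multiset" where
  "CL xs ys = (\<Sum>g\<in>#mset (shuffle xs ys). mset (cuts g))"

definition CR :: "'a list \<Rightarrow> 'a list \<Rightarrow> ('a list \<times> 'a list) multiset" where
  "CR xs ys = (\<Sum>ab\<in>#mset (cuts xs). \<Sum>cd\<in>#mset (cuts ys). PS (fst ab) (fst cd) (snd ab) (snd cd))"

lemma mset_cuts_Cons': "mset (cuts (x # g)) = add_mset ([], x # g) (image_mset (apx x) (mset (cuts g)))"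
  by (simp add: cuts_Cons apx_def[abs_def])

lemma sum_mset_add_mset_fun: "(\<Sum>g\<in>#M. add_mset (h g) (F g)) = image_mset h M + (\<Sum>g\<in>#M. F g)"
  by (induction M) auto

lemma CL_cons: "CL (x # xs) (y # ys) = image_mset (\<lambda>g. ([], g)) (mset (shuffle (x # xs) (y # ys)))
   + image_mset (apx x) (CL xs (y # ys)) + image_mset (apx y) (CL (x # xs) ys)"
  unfolding CL_def mset_shuffle_cons
  by (simp add: sum_mset_image_comp image_mset_sum_mset_gen mset_cuts_Cons' sum_mset_add_fun sum_mset_add_mset_fun multiset.map_comp o_def ac_simps)

lemma CR_cons: "CR (x # xs) (y # ys) = image_mset (\<lambda>g. ([], g)) (mset (shuffle (x # xs) (y # ys)))
   + image_mset (apx x) (CR xs (y # ys)) + image_mset (apx y) (CR (x # xs) ys)"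
  unfolding CR_def mset_cuts_Cons'
  by (simp add: sum_mset_image_comp image_mset_sum_mset_gen sum_mset_add_fun apx_def
      PS_cons_cons PS_nil_cons PS_cons_nil PS_nil_nil ac_simps)

lemma CL_eq_CR: "CL xs ys = CR xs ys"
proof (induction xs ys rule: shuffle.induct)
  case (1 ys)
  then show ?case unfolding CL_def CR_def PS_def by simp
next
  case (2 x xs)
  then show ?case unfolding CL_def CR_def PS_def by (simp add: sum_mset_single)
next
  case (3 x xs y ys)
  then show ?case by (simp add: CL_cons CR_cons)
qed



definition restr :: "word \<Rightarrow> word \<Rightarrow> word" where
  "restr \<rho> s = filter (\<lambda>a. a \<in> set s) \<rho>"

definition Gc :: "word \<Rightarrow> word \<times> word \<Rightarrow> (subst \<times> subst) \<Rightarrow>\<^sub>0 int" where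
  "Gc \<rho> ab = (if set (fst ab) \<inter> set (snd ab) = {}
     then frag_of (std (restr \<rho> (fst ab), fst ab), std (restr \<rho> (snd ab), snd ab)) else 0)"

lemma comult_basis_cuts: "comult_basis (\<rho>, \<sigma>) = sum_list (map (Gc \<rho>) (cuts \<sigma>))"
  unfolding comult_basis_def cuts_def Gc_def restr_def by (simp add: o_def Let_def cong: if_cong del: upt_Suc)

lemma sum_list_mset: "sum_list (map f L) = (\<Sum>x\<in>#mset L. f x)"
  by (simp add: sum_mset_sum_list[symmetric])

lemma restr_map:
  assumes "inj_on f (set \<rho> \<union> set s)"
  shows "restr (map f \<rho>) (map f s) = map f (restr \<rho> s)"
  using assms unfolding restr_def
  by (induction \<rho>) (auto simp: inj_on_def)

lemma comult_basis_map:
  assumes "inj_on f (set \<rho> \<union> set \<sigma>)"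
  shows "comult_basis (map f \<rho>, map f \<sigma>) = comult_basis (\<rho>, \<sigma>)"
proof -
  have "Gc (map f \<rho>) (take i (map f \<sigma>), drop i (map f \<sigma>)) = Gc \<rho> (take i \<sigma>, drop i \<sigma>)" for i
  proof -
    have sub1: "set (take i \<sigma>) \<subseteq> set \<sigma>" "set (drop i \<sigma>) \<subseteq> set \<sigma>"
      by (auto dest: in_set_takeD in_set_dropD)
    have inj1: "inj_on f (set \<rho> \<union> set (take i \<sigma>))" "inj_on f (set \<rho> \<union> set (drop i \<sigma>))"
      using sub1 by (auto intro: inj_on_subset[OF assms])
    have disj: "f ` set (take i \<sigma>) \<inter> f ` set (drop i \<sigma>) = {} \<longleftrightarrow> set (take i \<sigma>) \<inter> set (drop i \<sigma>) = {}"
      using sub1 assms by (auto simp: inj_on_def) blast+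
    have r1: "std (map f (restr \<rho> (take i \<sigma>)), map f (take i \<sigma>)) = std (restr \<rho> (take i \<sigma>), take i \<sigma>)"
      by (rule std_map, rule inj_on_subset[OF inj1(1)]) (auto simp: restr_def)
    have r2: "std (map f (restr \<rho> (drop i \<sigma>)), map f (drop i \<sigma>)) = std (restr \<rho> (drop i \<sigma>), drop i \<sigma>)"
      by (rule std_map, rule inj_on_subset[OF inj1(2)]) (auto simp: restr_def)
    show ?thesis unfolding Gc_def
      by (simp add: take_map drop_map restr_map[OF inj1(1)] restr_map[OF inj1(2)] disj r1 r2)
  qed
  then show ?thesis unfolding comult_basis_cuts cuts_def by (simp add: o_def del: upt_Suc)
qed

lemma comult_basis_std: "valid P \<Longrightarrow> comult_basis (std P) = comult_basis P"
proof -
  assume v: "valid P"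
  obtain \<rho> \<sigma> where P: "P = (\<rho>, \<sigma>)" by force
  have "set \<sigma> = set \<rho>" using v by (simp add: P valid_def)
  then have "inj_on (rn \<rho>) (set \<rho> \<union> set \<sigma>)" using rn_inj[of \<rho>] by simp
  then show ?thesis unfolding P std_def fst_conv snd_conv by (rule comult_basis_map)
qed

definition Mraw :: "subst \<Rightarrow> subst \<Rightarrow> subst \<Rightarrow>\<^sub>0 int" where
  "Mraw P Q = sum_list (map (\<lambda>\<gamma>. frag_of (std (fst P @ fst Q, \<gamma>))) (shuffle (snd P) (snd Q)))"

lemma mult_basis_std:
  assumes "valid P" "valid Q"
  shows "mult_basis (std P) (std Q) = mult_basis P Q"
  unfolding mult_basis_def using std_std[OF assms(1)] std_std[OF assms(2)] by simp

lemma mult_basis_raw: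
  assumes vP: "valid P" and vQ: "valid Q" and disj: "set (fst P) \<inter> set (fst Q) = {}"
  shows "mult_basis P Q = Mraw P Q"
proof -
  obtain \<rho> \<sigma> where P: "P = (\<rho>, \<sigma>)" by force
  obtain \<rho>' \<sigma>' where Q: "Q = (\<rho>', \<sigma>')" by force
  have s: "set \<sigma> = set \<rho>" "set \<sigma>' = set \<rho>'" using vP vQ by (auto simp: P Q valid_def)
  define k where "k = card (set \<rho>)"
  define h where "h a = (if a \<in> set \<rho> then rn \<rho> a else k + rn \<rho>' a)" for a
  have degk: "deg (std P) = k" using deg_std[OF vP] by (simp add: P deg_def k_def)
  have h1: "map h \<rho> = map (rn \<rho>) \<rho>" "map h \<sigma> = map (rn \<rho>) \<sigma>"
    using s by (auto simp: h_def)
  have h2: "map h \<rho>' = map ((+) k) (map (rn \<rho>') \<rho>')" "map h \<sigma>' = map ((+) k) (map (rn \<rho>') \<sigma>')"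
    using s disj by (auto simp: h_def P Q)
  have injh: "inj_on h (set \<rho> \<union> set \<rho>')"
  proof (rule inj_onI)
    fix a b assume a: "a \<in> set \<rho> \<union> set \<rho>'" and b: "b \<in> set \<rho> \<union> set \<rho>'" and e: "h a = h b"
    have lt: "rn \<rho> c < k" if "c \<in> set \<rho>" for c using rn_lt[OF that] k_def by simp
    show "a = b"
    proof (cases "a \<in> set \<rho>"; cases "b \<in> set \<rho>")
      assume "a \<in> set \<rho>" "b \<in> set \<rho>" then show ?thesis using e rn_inj[of \<rho>] by (auto simp: h_def inj_on_def)
    next
      assume "a \<in> set \<rho>" "b \<notin> set \<rho>" then show ?thesis using e lt[of a] by (auto simp: h_def)
    next
      assume "a \<notin> set \<rho>" "b \<in> set \<rho>" then show ?thesis using e lt[of b] by (auto simp: h_def)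
    next
      assume "a \<notin> set \<rho>" "b \<notin> set \<rho>" then show ?thesis using e a b rn_inj[of \<rho>'] by (auto simp: h_def inj_on_def)
    qed
  qed
  have "mult_basis P Q = sum_list (map (\<lambda>\<gamma>. frag_of (std (map h \<rho> @ map h \<rho>', \<gamma>))) (shuffle (map h \<sigma>) (map h \<sigma>')))"
  proof -
    have e1: "std P = (map h \<rho>, map h \<sigma>)" by (simp add: P std_def h1)
    have e2: "std Q = (map (rn \<rho>') \<rho>', map (rn \<rho>') \<sigma>')" by (simp add: Q std_def)
    have e3: "deg (map h \<rho>, map h \<sigma>) = k" using degk e1 by simp
    show ?thesis unfolding mult_basis_def e1 e2 Let_def by (simp add: h2 e3)
  qed
  also have "\<dots> = sum_list (map (\<lambda>\<gamma>. frag_of (std (map h (\<rho> @ \<rho>'), map h \<gamma>))) (shuffle \<sigma> \<sigma>'))"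
    by (simp add: shuffle_map o_def)
  also have "\<dots> = sum_list (map (\<lambda>\<gamma>. frag_of (std (\<rho> @ \<rho>', \<gamma>))) (shuffle \<sigma> \<sigma>'))"
  proof (rule arg_cong[where f=sum_list], rule map_cong[OF refl])
    fix \<gamma> assume "\<gamma> \<in> set (shuffle \<sigma> \<sigma>')"
    then have "set \<gamma> = set \<rho> \<union> set \<rho>'" using shuffle_set[of \<gamma> \<sigma> \<sigma>'] s by auto
    then show "frag_of (std (map h (\<rho> @ \<rho>'), map h \<gamma>)) = frag_of (std (\<rho> @ \<rho>', \<gamma>))"
      by (subst std_map) (use injh in auto)
  qed
  finally show ?thesis by (simp add: Mraw_def P Q)
qed

lemma mult_basis_raw_std:
  assumes "valid P" "valid Q" "set (fst P) \<inter> set (fst Q) = {}"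
  shows "mult_basis (std P) (std Q) = Mraw P Q"
  using mult_basis_std[OF assms(1,2)] mult_basis_raw[OF assms] by simp

definition shift :: "nat \<Rightarrow> subst \<Rightarrow> subst" where
  "shift k p = (map ((+) k) (fst p), map ((+) k) (snd p))"

lemma std_shift: "std (shift k p) = std p"
  unfolding shift_def by (cases p) (simp add: std_map)

lemma valid_shift: "valid p \<Longrightarrow> valid (shift k p)"
  by (simp add: valid_def shift_def)

lemma Canon_shift_std: "p \<in> Canon \<Longrightarrow> std (shift k p) = p"
  by (simp add: std_shift Canon_std)

lemma Canon_shift_disj: "p \<in> Canon \<Longrightarrow> set (fst p) \<inter> set (fst (shift (deg p) q)) = {}"
  using Canon_lt[of p] by (auto simp: shift_def)

lemma Canon_shift_lt: "p \<in> Canon \<Longrightarrow> a \<in> set (fst (shift k p)) \<Longrightarrow> k \<le> a \<and> a < k + deg p"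
  using Canon_lt[of p] by (auto simp: shift_def)



section \<open>Multiplication\<close>

lemma sum_list_concat_gen: "sum_list (concat xss) = sum_list (map sum_list xss)"
  by (induction xss) auto


lemma mult_of[simp]: "mult (frag_of (a, b)) = mult_basis a b"
  by (simp add: mult_def)

lemma mult_tensor: "mult (tensor x y) = frag_extend (\<lambda>a. frag_extend (\<lambda>b. mult_basis a b) y) x"
  unfolding mult_def frag_extend_tensor by simp

lemma deg_shift: "deg (shift k p) = deg p"
  by (simp add: deg_def shift_def card_image)

lemma mult_basis_Canon:
  assumes "p \<in> Canon" "q \<in> Canon"
  shows "mult_basis p q = Mraw p (shift (deg p) q)"
    and "valid p" "valid (shift (deg p) q)" "set (fst p) \<inter> set (fst (shift (deg p) q)) = {}"
proof -
  show vp: "valid p" using assms Canon_valid by auto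
  show vq: "valid (shift (deg p) q)" using assms Canon_valid valid_shift by auto
  show d: "set (fst p) \<inter> set (fst (shift (deg p) q)) = {}" using Canon_shift_disj[OF assms(1)] .
  have "mult_basis p q = mult_basis (std p) (std (shift (deg p) q))"
    using assms by (simp add: Canon_std Canon_shift_std)
  also have "\<dots> = Mraw p (shift (deg p) q)" by (rule mult_basis_raw_std[OF vp vq d])
  finally show "mult_basis p q = Mraw p (shift (deg p) q)" .
qed

lemma keys_Mraw:
  assumes "valid P" "valid Q"
  shows "Poly_Mapping.keys (Mraw P Q) \<subseteq> {std (fst P @ fst Q, \<gamma>) | \<gamma>. \<gamma> \<in> set (shuffle (snd P) (snd Q))}"
  unfolding Mraw_def using keys_sum_list by (fastforce simp: keys_frag_of)

lemma keys_mult_basis: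
  assumes "p \<in> Canon" "q \<in> Canon" "r \<in> Poly_Mapping.keys (mult_basis p q)"
  shows "r \<in> Canon \<and> deg r = deg p + deg q"
proof -
  note M = mult_basis_Canon[OF assms(1,2)]
  obtain \<gamma> where r: "r = std (fst p @ fst (shift (deg p) q), \<gamma>)"
     and g: "\<gamma> \<in> set (shuffle (snd p) (snd (shift (deg p) q)))"
    using keys_Mraw[OF M(2,3)] assms(3) M(1) by auto
  have sg: "set \<gamma> = set (snd p) \<union> set (snd (shift (deg p) q))" using shuffle_set[OF g] .
  have v: "valid (fst p @ fst (shift (deg p) q), \<gamma>)"
    using sg M(2,3) by (auto simp: valid_def)
  have "deg r = card (set (fst p) \<union> set (fst (shift (deg p) q)))"
    using deg_std[OF v] by (simp add: r deg_def)
  also have "\<dots> = deg p + deg (shift (deg p) q)"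
    using M(4) by (simp add: card_Un_disjoint deg_def)
  finally show ?thesis using std_Canon[OF v] r deg_shift by simp
qed

lemma keys_mult_basis_Canon: "p \<in> Canon \<Longrightarrow> q \<in> Canon \<Longrightarrow> Poly_Mapping.keys (mult_basis p q) \<subseteq> Canon"
  using keys_mult_basis by blast

lemma mult_closed:
  assumes "x \<in> dWHA" "y \<in> dWHA" shows "mult (tensor x y) \<in> dWHA"
  unfolding dWHA_def mem_Collect_eq mult_tensor
  apply (rule frag_extend_keys_sub, rule frag_extend_keys_sub)
  using assms keys_mult_basis_Canon unfolding dWHA_def by blast

lemma shift0: "shift 0 p = p"
  by (cases p) (simp add: shift_def map_idI)

lemma mult_basis_unit_left: "q \<in> Canon \<Longrightarrow> mult_basis empty_subst q = frag_of q"
  using mult_basis_Canon(1)[OF empty_Canon, of q]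
  by (simp add: deg_def shift0 Mraw_def empty_subst_def Canon_std)

lemma mult_basis_unit_right: "p \<in> Canon \<Longrightarrow> mult_basis p empty_subst = frag_of p"
  using mult_basis_Canon(1)[OF _ empty_Canon, of p]
  by (simp add: shift_def Mraw_def empty_subst_def Canon_std)

lemma unit1: "unit 1 = frag_of empty_subst"
  by (simp add: unit_def)

lemma mult_unit_left: "x \<in> dWHA \<Longrightarrow> mult (tensor (unit 1) x) = x"
proof -
  assume x: "x \<in> dWHA"
  have "mult (tensor (unit 1) x) = frag_extend frag_of x"
    unfolding unit1 mult_tensor frag_extend_of
    by (rule frag_extend_cong_keys) (use x mult_basis_unit_left in \<open>auto simp: dWHA_def\<close>)
  then show ?thesis by simp
qed

lemma mult_unit_right: "x \<in> dWHA \<Longrightarrow> mult (tensor x (unit 1)) = x"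
proof -
  assume x: "x \<in> dWHA"
  have "mult (tensor x (unit 1)) = frag_extend frag_of x"
    unfolding unit1 mult_tensor frag_extend_of
    by (rule frag_extend_cong_keys) (use x mult_basis_unit_right in \<open>auto simp: dWHA_def\<close>)
  then show ?thesis by simp
qed

lemma Mraw_frag_extend:
  assumes "\<And>\<gamma>. \<gamma> \<in> set (shuffle (snd P) (snd Q)) \<Longrightarrow> f (std (fst P @ fst Q, \<gamma>)) = g \<gamma>"
  shows "frag_extend f (Mraw P Q) = sum_list (map g (shuffle (snd P) (snd Q)))"
  unfolding Mraw_def frag_extend_sum_list map_map
  by (rule arg_cong[where f=sum_list], rule map_cong) (auto simp: assms)

lemma mult_basis_assoc:
  assumes p: "p \<in> Canon" and q: "q \<in> Canon" and r: "r \<in> Canon"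
  shows "frag_extend (\<lambda>c. mult_basis c r) (mult_basis p q) = frag_extend (\<lambda>e. mult_basis p e) (mult_basis q r)"
proof -
  obtain \<rho>1 \<sigma>1 where P: "p = (\<rho>1, \<sigma>1)" by force
  define Q where "Q = shift (deg p) q"
  define R where "R = shift (deg p + deg q) r"
  obtain \<rho>2 \<sigma>2 where Q': "Q = (\<rho>2, \<sigma>2)" by force
  obtain \<rho>3 \<sigma>3 where R': "R = (\<rho>3, \<sigma>3)" by force
  have vp: "valid p" and vQ: "valid Q" and vR: "valid R"
    using p q r Canon_valid valid_shift by (auto simp: Q_def R_def)
  have sP: "set \<sigma>1 = set \<rho>1" using vp by (simp add: P valid_def)
  have sQ: "set \<sigma>2 = set \<rho>2" using vQ by (simp add: Q' valid_def)
  have sR: "set \<sigma>3 = set \<rho>3" using vR by (simp add: R' valid_def)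
  have l1: "a < deg p" if "a \<in> set \<rho>1" for a using Canon_lt[OF p] that by (simp add: P)
  have l2: "deg p \<le> a \<and> a < deg p + deg q" if "a \<in> set \<rho>2" for a
    using Canon_shift_lt[OF q, of a "deg p"] that by (simp add: Q_def[symmetric] Q')
  have l3: "deg p + deg q \<le> a" if "a \<in> set \<rho>3" for a
    using Canon_shift_lt[OF r, of a "deg p + deg q"] that by (simp add: R_def[symmetric] R')
  have d12: "set \<rho>1 \<inter> set \<rho>2 = {}" using l1 l2 by fastforce
  have d13: "set \<rho>1 \<inter> set \<rho>3 = {}" using l1 l3 by fastforce
  have d23: "set \<rho>2 \<inter> set \<rho>3 = {}" using l2 l3 by fastforce
  have stdQ: "std Q = q" and stdR: "std R = r" using q r by (simp_all add: Q_def R_def Canon_shift_std)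
  have stdp: "std p = p" using p by (simp add: Canon_std)
  have mpq: "mult_basis p q = Mraw p Q"
    using mult_basis_raw_std[OF vp vQ] stdQ stdp d12 by (simp add: P Q')
  have mqr: "mult_basis q r = Mraw Q R"
    using mult_basis_raw_std[OF vQ vR] stdQ stdR d23 by (simp add: R' Q')
  have "frag_extend (\<lambda>c. mult_basis c r) (mult_basis p q) =
      sum_list (map (\<lambda>\<gamma>. sum_list (map (\<lambda>\<delta>. frag_of (std (\<rho>1 @ \<rho>2 @ \<rho>3, \<delta>))) (shuffle \<gamma> \<sigma>3))) (shuffle (snd p) (snd Q)))"
    unfolding mpq
  proof (rule Mraw_frag_extend)
    fix \<gamma> assume g: "\<gamma> \<in> set (shuffle (snd p) (snd Q))"
    then have sg: "set \<gamma> = set \<rho>1 \<union> set \<rho>2" using shuffle_set[OF g] sP sQ by (simp add: P Q')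
    have vg: "valid (\<rho>1 @ \<rho>2, \<gamma>)" using sg by (simp add: valid_def)
    have "mult_basis (std (fst p @ fst Q, \<gamma>)) r = mult_basis (std (\<rho>1 @ \<rho>2, \<gamma>)) (std R)"
      by (simp add: P Q' stdR)
    also have "\<dots> = Mraw (\<rho>1 @ \<rho>2, \<gamma>) R"
      by (rule mult_basis_raw_std[OF vg vR]) (use d13 d23 in \<open>auto simp: R'\<close>)
    finally show "mult_basis (std (fst p @ fst Q, \<gamma>)) r =
       sum_list (map (\<lambda>\<delta>. frag_of (std (\<rho>1 @ \<rho>2 @ \<rho>3, \<delta>))) (shuffle \<gamma> \<sigma>3))"
      by (simp add: Mraw_def R')
  qed
  also have "\<dots> = sum_list (map (\<lambda>\<delta>. frag_of (std (\<rho>1 @ \<rho>2 @ \<rho>3, \<delta>))) (concat (map (\<lambda>\<gamma>. shuffle \<gamma> \<sigma>3) (shuffle \<sigma>1 \<sigma>2))))"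
    by (simp add: map_concat sum_list_concat_gen o_def P Q')
  also have "\<dots> = sum_list (map (\<lambda>\<delta>. frag_of (std (\<rho>1 @ \<rho>2 @ \<rho>3, \<delta>))) (concat (map (\<lambda>\<gamma>. shuffle \<sigma>1 \<gamma>) (shuffle \<sigma>2 \<sigma>3))))"
    unfolding sum_list_mset using shuffle_assoc_mset by metis
  also have "\<dots> = sum_list (map (\<lambda>\<gamma>. sum_list (map (\<lambda>\<delta>. frag_of (std (\<rho>1 @ \<rho>2 @ \<rho>3, \<delta>))) (shuffle \<sigma>1 \<gamma>))) (shuffle (snd Q) (snd R)))"
    by (simp add: map_concat sum_list_concat_gen o_def R' Q')
  also have "\<dots> = frag_extend (\<lambda>e. mult_basis p e) (mult_basis q r)"
    unfolding mqr
  proof (rule Mraw_frag_extend[symmetric])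
    fix \<gamma> assume g: "\<gamma> \<in> set (shuffle (snd Q) (snd R))"
    then have sg: "set \<gamma> = set \<rho>2 \<union> set \<rho>3" using shuffle_set[OF g] sR sQ by (simp add: R' Q')
    have vg: "valid (\<rho>2 @ \<rho>3, \<gamma>)" using sg by (simp add: valid_def)
    have "mult_basis p (std (fst Q @ fst R, \<gamma>)) = mult_basis (std p) (std (\<rho>2 @ \<rho>3, \<gamma>))"
      by (simp add: stdp Q' R')
    also have "\<dots> = Mraw p (\<rho>2 @ \<rho>3, \<gamma>)"
      by (rule mult_basis_raw_std[OF vp vg]) (use d12 d13 in \<open>auto simp: P\<close>)
    finally show "mult_basis p (std (fst Q @ fst R, \<gamma>)) =
       sum_list (map (\<lambda>\<delta>. frag_of (std (\<rho>1 @ \<rho>2 @ \<rho>3, \<delta>))) (shuffle \<sigma>1 \<gamma>))"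
      by (simp add: Mraw_def P)
  qed
  finally show ?thesis .
qed

lemma mult_assoc:
  assumes x: "x \<in> dWHA" and y: "y \<in> dWHA" and z: "z \<in> dWHA"
  shows "mult (tensor (mult (tensor x y)) z) = mult (tensor x (mult (tensor y z)))"
proof -
  have "mult (tensor (mult (tensor x y)) z) =
     frag_extend (\<lambda>a. frag_extend (\<lambda>b. frag_extend (\<lambda>c. frag_extend (\<lambda>d. mult_basis c d) z) (mult_basis a b)) y) x"
    unfolding mult_tensor frag_extend_frag_extend ..
  also have "\<dots> = frag_extend (\<lambda>a. frag_extend (\<lambda>b. frag_extend (\<lambda>d. frag_extend (\<lambda>c. mult_basis c d) (mult_basis a b)) z) y) x"
  proof -
    have sw: "\<And>a b. frag_extend (\<lambda>c. frag_extend (\<lambda>d. mult_basis c d) z) (mult_basis a b) =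
       frag_extend (\<lambda>d. frag_extend (\<lambda>c. mult_basis c d) (mult_basis a b)) z"
      by (rule frag_extend_swap)
    show ?thesis by (simp only: sw)
  qed
  also have "\<dots> = frag_extend (\<lambda>a. frag_extend (\<lambda>b. frag_extend (\<lambda>d. frag_extend (\<lambda>e. mult_basis a e) (mult_basis b d)) z) y) x"
    apply (rule frag_extend_cong_keys)+
    using x y z mult_basis_assoc unfolding dWHA_def by blast
  also have "\<dots> = mult (tensor x (mult (tensor y z)))"
    unfolding mult_tensor frag_extend_frag_extend ..
  finally show ?thesis .
qed



definition T1 :: "'a list \<Rightarrow> ('a list \<times> 'a list \<times> 'a list) multiset" where
  "T1 s = (\<Sum>ab\<in>#mset (cuts s). image_mset (\<lambda>a12. (fst a12, snd a12, snd ab)) (mset (cuts (fst ab))))"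

definition T2 :: "'a list \<Rightarrow> ('a list \<times> 'a list \<times> 'a list) multiset" where
  "T2 s = (\<Sum>ab\<in>#mset (cuts s). image_mset (\<lambda>b12. (fst ab, fst b12, snd b12)) (mset (cuts (snd ab))))"

lemma T1_eq_T2: "T1 s = T2 s"
proof (induction s)
  case Nil
  then show ?case by (simp add: T1_def T2_def)
next
  case (Cons x s)
  have "T1 (x # s) = add_mset ([], [], x # s) (image_mset (\<lambda>ab. ([], x # fst ab, snd ab)) (mset (cuts s))
      + image_mset (\<lambda>t. (x # fst t, snd t)) (T1 s))"
    unfolding T1_def mset_cuts_Cons
    by (simp add: mset_cuts_Cons image_mset_sum_mset_gen multiset.map_comp o_def sum_mset_image_comp sum_mset_add_mset_fun)
  moreover have "T2 (x # s) = add_mset ([], [], x # s) (image_mset (\<lambda>ab. ([], x # fst ab, snd ab)) (mset (cuts s))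
      + image_mset (\<lambda>t. (x # fst t, snd t)) (T2 s))"
    unfolding T2_def mset_cuts_Cons
    by (simp add: mset_cuts_Cons image_mset_sum_mset_gen multiset.map_comp o_def sum_mset_image_comp sum_mset_add_mset_fun)
  ultimately show ?case using Cons by simp
qed

lemma cuts_append: "ab \<in> set (cuts s) \<Longrightarrow> fst ab @ snd ab = s"
  by (auto simp: cuts_def)

lemma sum_mset_Union: "(\<Sum>t\<in>#(\<Sum>x\<in>#M. N x). f t) = (\<Sum>x\<in>#M. \<Sum>t\<in>#N x. f t)"
  by (induction M) auto

lemma sum_mset_cong: "(\<And>x. x \<in># M \<Longrightarrow> f x = g x) \<Longrightarrow> (\<Sum>x\<in>#M. f x) = (\<Sum>x\<in>#M. g x)"
  by (metis image_mset_cong)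



section \<open>Comultiplication\<close>

lemma sum_list_zero_map: "(\<And>x. x \<in> set L \<Longrightarrow> g x = 0) \<Longrightarrow> sum_list (map g L) = (0::'a::monoid_add)"
  by (induction L) auto


abbreviation S :: "word \<Rightarrow> word \<Rightarrow> subst" where
  "S \<rho> s \<equiv> std (restr \<rho> s, s)"

lemma restr_set: "set (restr \<rho> s) = set \<rho> \<inter> set s"
  by (auto simp: restr_def)

lemma restr_restr: "set s' \<subseteq> set s \<Longrightarrow> restr (restr \<rho> s) s' = restr \<rho> s'"
  unfolding restr_def by (induction \<rho>) auto

lemma restr_all: "set \<rho> \<subseteq> set s \<Longrightarrow> restr \<rho> s = \<rho>"
  unfolding restr_def by (induction \<rho>) auto

lemma valid_restr: "set s \<subseteq> set \<rho> \<Longrightarrow> valid (restr \<rho> s, s)"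
  by (auto simp: valid_def restr_set)

lemma cuts_sub: "ab \<in> set (cuts s) \<Longrightarrow> set (fst ab) \<subseteq> set s \<and> set (snd ab) \<subseteq> set s"
  using cuts_append[of ab s] by auto

lemma comult_of[simp]: "comult (frag_of p) = comult_basis p"
  by (simp add: comult_def)

lemma deg_S: "set s \<subseteq> set \<rho> \<Longrightarrow> deg (S \<rho> s) = card (set s)"
  using deg_std[OF valid_restr] by (auto simp: deg_def restr_set Int_absorb1)

lemma keys_comult_basis:
  assumes v: "valid p" and k: "ab \<in> Poly_Mapping.keys (comult_basis p)"
  shows "fst ab \<in> Canon \<and> snd ab \<in> Canon \<and> deg (fst ab) + deg (snd ab) = deg p"
proof -
  obtain \<rho> \<sigma> where P: "p = (\<rho>, \<sigma>)" by force
  have s: "set \<sigma> = set \<rho>" using v by (simp add: P valid_def)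
  have "ab \<in> (\<Union>x\<in>set (map (Gc \<rho>) (cuts \<sigma>)). Poly_Mapping.keys x)"
    using k keys_sum_list[of "map (Gc \<rho>) (cuts \<sigma>)"] unfolding P comult_basis_cuts by blast
  then obtain cd where cd: "cd \<in> set (cuts \<sigma>)" and k2: "ab \<in> Poly_Mapping.keys (Gc \<rho> cd)"
    by auto
  have dj: "set (fst cd) \<inter> set (snd cd) = {}"
  proof (rule ccontr)
    assume "set (fst cd) \<inter> set (snd cd) \<noteq> {}"
    then have "Gc \<rho> cd = 0" by (simp add: Gc_def)
    then show False using k2 by simp
  qed
  then have ab: "ab = (S \<rho> (fst cd), S \<rho> (snd cd))"
    using k2 by (simp add: Gc_def keys_frag_of)
  have sub: "set (fst cd) \<subseteq> set \<rho>" "set (snd cd) \<subseteq> set \<rho>" using cuts_sub[OF cd] s by auto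
  have un: "set (fst cd) \<union> set (snd cd) = set \<rho>" using cuts_append[OF cd] s by (metis set_append)
  have "deg (fst ab) + deg (snd ab) = card (set (fst cd)) + card (set (snd cd))"
    using ab deg_S[OF sub(1)] deg_S[OF sub(2)] by simp
  also have "\<dots> = card (set (fst cd) \<union> set (snd cd))" using dj by (simp add: card_Un_disjoint)
  also have "\<dots> = deg p" using un by (simp add: P deg_def)
  finally show ?thesis using ab std_Canon[OF valid_restr[OF sub(1)]] std_Canon[OF valid_restr[OF sub(2)]]
    by simp
qed

lemma comult_closed: "x \<in> dWHA \<Longrightarrow> comult x \<in> dWHA2"
  unfolding dWHA_def dWHA2_def mem_Collect_eq comult_def
proof (rule frag_extend_keys_sub)
  fix a assume x: "Poly_Mapping.keys x \<subseteq> Canon" and a: "a \<in> Poly_Mapping.keys x"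
  then have v: "valid a" using Canon_valid by blast
  show "Poly_Mapping.keys (comult_basis a) \<subseteq> Canon \<times> Canon"
  proof
    fix ab assume "ab \<in> Poly_Mapping.keys (comult_basis a)"
    then have "fst ab \<in> Canon \<and> snd ab \<in> Canon" using keys_comult_basis[OF v] by blast
    then show "ab \<in> Canon \<times> Canon" by (cases ab) auto
  qed
qed

lemma counit_of: "counit (frag_of a) = (if a = empty_subst then 1 else 0)"
  by (simp add: counit_def)

lemma S_empty_iff: "S \<rho> s = empty_subst \<longleftrightarrow> s = [] \<and> restr \<rho> s = []"
  by (auto simp: std_def empty_subst_def)

lemma lcounit_sum_list: "lcounit (sum_list L) = sum_list (map lcounit L)"
  by (simp add: lcounit_def[abs_def] frag_extend_sum_list)

lemma lcounit_Gc0: "fst ab \<noteq> [] \<Longrightarrow> lcounit (Gc \<rho> ab) = 0"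
  unfolding Gc_def lcounit_def by (auto simp: counit_of S_empty_iff)

lemma lcounit_basis:
  assumes v: "valid p"
  shows "lcounit (comult_basis p) = frag_of (std p)"
proof -
  obtain \<rho> \<sigma> where P: "p = (\<rho>, \<sigma>)" by force
  have s: "set \<sigma> = set \<rho>" using v by (simp add: P valid_def)
  have rn: "restr \<rho> [] = []" by (simp add: restr_def)
  have "S \<rho> [] = empty_subst" by (simp add: std_def empty_subst_def rn)
  then have h0: "lcounit (Gc \<rho> ([], \<sigma>)) = frag_of (std p)"
    using s by (simp add: lcounit_def Gc_def counit_of P restr_all)
  define f where "f i = (take i \<sigma>, drop i \<sigma>)" for i
  have c: "cuts \<sigma> = f 0 # map f [1..<Suc (length \<sigma>)]"
    unfolding cuts_def f_def by (simp add: upt_conv_Cons del: upt_Suc)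
  have "sum_list (map (lcounit \<circ> Gc \<rho>) (map f [1..<Suc (length \<sigma>)])) = 0"
    unfolding map_map by (rule sum_list_zero_map) (auto simp: f_def intro!: lcounit_Gc0)
  then show ?thesis
    unfolding comult_basis_cuts P lcounit_sum_list c using h0 by (simp add: P comp_assoc del: upt_Suc) (simp add: f_def)
qed

lemma rcounit_sum_list: "rcounit (sum_list L) = sum_list (map rcounit L)"
  by (simp add: rcounit_def[abs_def] frag_extend_sum_list)

lemma rcounit_Gc0: "snd ab \<noteq> [] \<Longrightarrow> rcounit (Gc \<rho> ab) = 0"
  unfolding Gc_def rcounit_def by (auto simp: counit_of S_empty_iff)

lemma rcounit_basis:
  assumes v: "valid p"
  shows "rcounit (comult_basis p) = frag_of (std p)"
proof -
  obtain \<rho> \<sigma> where P: "p = (\<rho>, \<sigma>)" by force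
  have s: "set \<sigma> = set \<rho>" using v by (simp add: P valid_def)
  have rn: "restr \<rho> [] = []" by (simp add: restr_def)
  have "S \<rho> [] = empty_subst" by (simp add: std_def empty_subst_def rn)
  then have h0: "rcounit (Gc \<rho> (\<sigma>, [])) = frag_of (std p)"
    using s by (simp add: rcounit_def Gc_def counit_of P restr_all)
  define f where "f i = (take i \<sigma>, drop i \<sigma>)" for i
  have c: "cuts \<sigma> = map f [0..<length \<sigma>] @ [f (length \<sigma>)]"
    unfolding cuts_def f_def by simp
  have "sum_list (map (rcounit \<circ> Gc \<rho>) (map f [0..<length \<sigma>])) = 0"
    unfolding map_map by (rule sum_list_zero_map) (auto simp: f_def intro!: rcounit_Gc0)
  then show ?thesis
    unfolding comult_basis_cuts P rcounit_sum_list c using h0 by (simp add: P comp_assoc del: upt_Suc) (simp add: f_def)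
qed

lemma counit_laws:
  assumes x: "x \<in> dWHA"
  shows "lcounit (comult x) = x \<and> rcounit (comult x) = x"
proof -
  have "lcounit (comult x) = frag_extend (\<lambda>p. lcounit (comult_basis p)) x"
    unfolding lcounit_def comult_def frag_extend_frag_extend ..
  also have "\<dots> = frag_extend frag_of x"
    by (rule frag_extend_cong_keys) (use x in \<open>auto simp: dWHA_def lcounit_basis Canon_valid Canon_std subset_iff\<close>)
  finally have 1: "lcounit (comult x) = x" by simp
  have "rcounit (comult x) = frag_extend (\<lambda>p. rcounit (comult_basis p)) x"
    unfolding rcounit_def comult_def frag_extend_frag_extend ..
  also have "\<dots> = frag_extend frag_of x"
    by (rule frag_extend_cong_keys) (use x in \<open>auto simp: dWHA_def rcounit_basis Canon_valid Canon_std subset_iff\<close>)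
  finally have 2: "rcounit (comult x) = x" by simp
  from 1 2 show ?thesis ..
qed



section \<open>Coassociativity\<close>

lemma tassoc_sum_list: "tassoc (sum_list L) = sum_list (map tassoc L)"
  by (simp add: tassoc_def[abs_def] frag_extend_sum_list)
lemma tassoc_of[simp]: "tassoc (frag_of ((a, b), c)) = frag_of (a, (b, c))"
  by (simp add: tassoc_def)
lemma tassoc_0[simp]: "tassoc 0 = 0"
  by (simp add: tassoc_def)
lemma tmap_sum_list: "tmap f g (sum_list L) = sum_list (map (tmap f g) L)"
  by (simp add: tmap_def[abs_def] frag_extend_sum_list)
lemma tmap_0[simp]: "tmap f g 0 = 0"
  by (simp add: tmap_def)

definition Phi3 :: "word \<Rightarrow> word \<times> word \<times> word \<Rightarrow> (subst \<times> subst \<times> subst) \<Rightarrow>\<^sub>0 int" where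
  "Phi3 \<rho> t = (if set (fst t) \<inter> set (fst (snd t)) = {} \<and> set (fst t) \<inter> set (snd (snd t)) = {}
      \<and> set (fst (snd t)) \<inter> set (snd (snd t)) = {}
     then frag_of (S \<rho> (fst t), (S \<rho> (fst (snd t)), S \<rho> (snd (snd t)))) else 0)"

lemma sum_mset_zero: "(\<And>x. x \<in># M \<Longrightarrow> f x = 0) \<Longrightarrow> (\<Sum>x\<in>#M. f x) = (0::'a::comm_monoid_add)"
  by (induction M) auto

lemma coassoc_L:
  assumes v: "valid (\<rho>, \<sigma>)"
  shows "tassoc (tmap comult id (comult_basis (\<rho>, \<sigma>))) = (\<Sum>t\<in>#T1 \<sigma>. Phi3 \<rho> t)"
proof -
  have s: "set \<sigma> = set \<rho>" using v by (simp add: valid_def)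
  have pt: "tassoc (tmap comult id (Gc \<rho> ab)) = (\<Sum>a12\<in>#mset (cuts (fst ab)). Phi3 \<rho> (fst a12, snd a12, snd ab))"
    if ab: "ab \<in> set (cuts \<sigma>)" for ab
  proof (cases "set (fst ab) \<inter> set (snd ab) = {}")
    case False
    have "Phi3 \<rho> (fst a12, snd a12, snd ab) = 0" if "a12 \<in># mset (cuts (fst ab))" for a12
    proof -
      have e: "set (fst ab) = set (fst a12) \<union> set (snd a12)"
        using cuts_append[of a12 "fst ab"] that by (metis set_append set_mset_mset)
      show ?thesis using e False unfolding Phi3_def by auto
    qed
    then have "(\<Sum>a12\<in>#mset (cuts (fst ab)). Phi3 \<rho> (fst a12, snd a12, snd ab)) = 0"
      by (rule sum_mset_zero)
    then show ?thesis using False by (simp add: Gc_def)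
  next
    case True
    define a where "a = fst ab"
    define b where "b = snd ab"
    have sa: "set a \<subseteq> set \<rho>" using cuts_sub[OF ab] s by (simp add: a_def)
    have "tassoc (tmap comult id (Gc \<rho> ab)) = tassoc (tensor (comult_basis (S \<rho> a)) (frag_of (S \<rho> b)))"
      using True by (simp add: Gc_def a_def b_def)
    also have "\<dots> = tassoc (tensor (sum_list (map (Gc (restr \<rho> a)) (cuts a))) (frag_of (S \<rho> b)))"
      by (simp add: comult_basis_std[OF valid_restr[OF sa]] comult_basis_cuts)
    also have "\<dots> = sum_list (map (\<lambda>a12. tassoc (tensor (Gc (restr \<rho> a) a12) (frag_of (S \<rho> b)))) (cuts a))"
      by (simp add: tensor_sum_list1 tassoc_sum_list o_def)
    also have "\<dots> = (\<Sum>a12\<in>#mset (cuts a). tassoc (tensor (Gc (restr \<rho> a) a12) (frag_of (S \<rho> b))))"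
      by (rule sum_list_mset)
    also have "\<dots> = (\<Sum>a12\<in>#mset (cuts a). Phi3 \<rho> (fst a12, snd a12, b))"
    proof (rule sum_mset_cong)
      fix a12 assume "a12 \<in># mset (cuts a)"
      then have a12: "a12 \<in> set (cuts a)" by simp
      have e: "fst a12 @ snd a12 = a" using cuts_append[OF a12] .
      have sub: "set (fst a12) \<subseteq> set a" "set (snd a12) \<subseteq> set a" using cuts_sub[OF a12] by auto
      have dab: "set a \<inter> set b = {}" using True by (simp add: a_def b_def)
      show "tassoc (tensor (Gc (restr \<rho> a) a12) (frag_of (S \<rho> b))) = Phi3 \<rho> (fst a12, snd a12, b)"
        using dab e sub unfolding Gc_def Phi3_def
        by (auto simp: restr_restr)
    qed
    finally show ?thesis by (simp add: a_def b_def)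
  qed
  have "tassoc (tmap comult id (comult_basis (\<rho>, \<sigma>))) = sum_list (map (\<lambda>ab. tassoc (tmap comult id (Gc \<rho> ab))) (cuts \<sigma>))"
    by (simp add: comult_basis_cuts tmap_sum_list tassoc_sum_list o_def)
  also have "\<dots> = (\<Sum>ab\<in>#mset (cuts \<sigma>). tassoc (tmap comult id (Gc \<rho> ab)))"
    by (rule sum_list_mset)
  also have "\<dots> = (\<Sum>ab\<in>#mset (cuts \<sigma>). \<Sum>a12\<in>#mset (cuts (fst ab)). Phi3 \<rho> (fst a12, snd a12, snd ab))"
    by (rule sum_mset_cong) (simp add: pt)
  also have "\<dots> = (\<Sum>t\<in>#T1 \<sigma>. Phi3 \<rho> t)"
    unfolding T1_def sum_mset_Union by (simp add: sum_mset_image_comp)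
  finally show ?thesis .
qed

lemma coassoc_R:
  assumes v: "valid (\<rho>, \<sigma>)"
  shows "tmap id comult (comult_basis (\<rho>, \<sigma>)) = (\<Sum>t\<in>#T2 \<sigma>. Phi3 \<rho> t)"
proof -
  have s: "set \<sigma> = set \<rho>" using v by (simp add: valid_def)
  have pt: "tmap id comult (Gc \<rho> ab) = (\<Sum>b12\<in>#mset (cuts (snd ab)). Phi3 \<rho> (fst ab, fst b12, snd b12))"
    if ab: "ab \<in> set (cuts \<sigma>)" for ab
  proof (cases "set (fst ab) \<inter> set (snd ab) = {}")
    case False
    have "Phi3 \<rho> (fst ab, fst b12, snd b12) = 0" if "b12 \<in># mset (cuts (snd ab))" for b12
    proof -
      have e: "set (snd ab) = set (fst b12) \<union> set (snd b12)"
        using cuts_append[of b12 "snd ab"] that by (metis set_append set_mset_mset)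
      show ?thesis using e False unfolding Phi3_def by auto
    qed
    then have "(\<Sum>b12\<in>#mset (cuts (snd ab)). Phi3 \<rho> (fst ab, fst b12, snd b12)) = 0"
      by (rule sum_mset_zero)
    then show ?thesis using False by (simp add: Gc_def)
  next
    case True
    define a where "a = fst ab"
    define b where "b = snd ab"
    have sb: "set b \<subseteq> set \<rho>" using cuts_sub[OF ab] s by (simp add: b_def)
    have "tmap id comult (Gc \<rho> ab) = tensor (frag_of (S \<rho> a)) (comult_basis (S \<rho> b))"
      using True by (simp add: Gc_def a_def b_def)
    also have "\<dots> = tensor (frag_of (S \<rho> a)) (sum_list (map (Gc (restr \<rho> b)) (cuts b)))"
      by (simp add: comult_basis_std[OF valid_restr[OF sb]] comult_basis_cuts)
    also have "\<dots> = sum_list (map (\<lambda>b12. tensor (frag_of (S \<rho> a)) (Gc (restr \<rho> b) b12)) (cuts b))"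
      by (simp add: tensor_sum_list2 o_def)
    also have "\<dots> = (\<Sum>b12\<in>#mset (cuts b). tensor (frag_of (S \<rho> a)) (Gc (restr \<rho> b) b12))"
      by (rule sum_list_mset)
    also have "\<dots> = (\<Sum>b12\<in>#mset (cuts b). Phi3 \<rho> (a, fst b12, snd b12))"
    proof (rule sum_mset_cong)
      fix b12 assume "b12 \<in># mset (cuts b)"
      then have b12: "b12 \<in> set (cuts b)" by simp
      have e: "fst b12 @ snd b12 = b" using cuts_append[OF b12] .
      have sub: "set (fst b12) \<subseteq> set b" "set (snd b12) \<subseteq> set b" using cuts_sub[OF b12] by auto
      have dab: "set a \<inter> set b = {}" using True by (simp add: a_def b_def)
      show "tensor (frag_of (S \<rho> a)) (Gc (restr \<rho> b) b12) = Phi3 \<rho> (a, fst b12, snd b12)"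
        using dab e sub unfolding Gc_def Phi3_def
        by (auto simp: restr_restr)
    qed
    finally show ?thesis by (simp add: a_def b_def)
  qed
  have "tmap id comult (comult_basis (\<rho>, \<sigma>)) = sum_list (map (\<lambda>ab. tmap id comult (Gc \<rho> ab)) (cuts \<sigma>))"
    by (simp add: comult_basis_cuts tmap_sum_list o_def)
  also have "\<dots> = (\<Sum>ab\<in>#mset (cuts \<sigma>). tmap id comult (Gc \<rho> ab))"
    by (rule sum_list_mset)
  also have "\<dots> = (\<Sum>ab\<in>#mset (cuts \<sigma>). \<Sum>b12\<in>#mset (cuts (snd ab)). Phi3 \<rho> (fst ab, fst b12, snd b12))"
    by (rule sum_mset_cong) (simp add: pt)
  also have "\<dots> = (\<Sum>t\<in>#T2 \<sigma>. Phi3 \<rho> t)"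
    unfolding T2_def sum_mset_Union by (simp add: sum_mset_image_comp)
  finally show ?thesis .
qed

lemma coassoc_basis:
  assumes v: "valid p"
  shows "tassoc (tmap comult id (comult_basis p)) = tmap id comult (comult_basis p)"
proof -
  obtain \<rho> \<sigma> where P: "p = (\<rho>, \<sigma>)" by force
  show ?thesis using coassoc_L[of \<rho> \<sigma>] coassoc_R[of \<rho> \<sigma>] v T1_eq_T2[of \<sigma>] by (simp add: P)
qed

lemma coassoc:
  assumes x: "x \<in> dWHA"
  shows "tassoc (tmap comult id (comult x)) = tmap id comult (comult x)"
proof -
  have "tassoc (tmap comult id (comult x)) = frag_extend (\<lambda>p. tassoc (tmap comult id (comult_basis p))) x"
    unfolding tassoc_def[of "tmap comult id (comult x)"] tmap_def[of comult id "comult x"] comult_def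
    by (simp only: frag_extend_frag_extend tassoc_def tmap_def)
  also have "\<dots> = frag_extend (\<lambda>p. tmap id comult (comult_basis p)) x"
    by (rule frag_extend_cong_keys) (use x in \<open>auto simp: dWHA_def coassoc_basis Canon_valid subset_iff\<close>)
  also have "\<dots> = tmap id comult (comult x)"
    unfolding tmap_def[of id comult "comult x"] comult_def
    by (simp only: frag_extend_frag_extend tmap_def)
  finally show ?thesis .
qed



section \<open>Compatibility of product and coproduct\<close>

lemma midtw_sum_list: "midtw (sum_list L) = sum_list (map midtw L)"
  by (simp add: midtw_def[abs_def] frag_extend_sum_list)
lemma midtw_of[simp]: "midtw (frag_of ((a, b), (c, d))) = frag_of ((a, c), (b, d))"
  by (simp add: midtw_def)
lemma midtw_0[simp]: "midtw 0 = 0"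
  by (simp add: midtw_def)
lemma comult_sum_list: "comult (sum_list L) = sum_list (map comult L)"
  by (simp add: comult_def[abs_def] frag_extend_sum_list)

lemma restr_append: "restr (\<rho> @ \<rho>') s = restr \<rho> s @ restr \<rho>' s"
  by (simp add: restr_def)

lemma restr_cong: "set \<rho> \<inter> set s = set \<rho> \<inter> set s' \<Longrightarrow> restr \<rho> s = restr \<rho> s'"
  unfolding restr_def by (rule filter_cong) auto

lemma tensor_sum_sum:
  "tensor (sum_list (map f L1)) (sum_list (map g L2)) = sum_list (map (\<lambda>x. sum_list (map (\<lambda>y. tensor (f x) (g y)) L2)) L1)"
  unfolding tensor_sum_list1 by (simp add: tensor_sum_list2 o_def)

lemma bialg_basis_raw:
  assumes vP: "valid (\<rho>, \<sigma>)" and vQ: "valid (\<rho>', \<sigma>')" and dj: "set \<rho> \<inter> set \<rho>' = {}"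
  shows "comult (Mraw (\<rho>, \<sigma>) (\<rho>', \<sigma>')) =
    tmap mult mult (midtw (tensor (comult_basis (\<rho>, \<sigma>)) (comult_basis (\<rho>', \<sigma>'))))"
proof -
  have s: "set \<sigma> = set \<rho>" "set \<sigma>' = set \<rho>'" using vP vQ by (auto simp: valid_def)
  have "comult (Mraw (\<rho>, \<sigma>) (\<rho>', \<sigma>')) = sum_list (map (\<lambda>\<gamma>. comult_basis (\<rho> @ \<rho>', \<gamma>)) (shuffle \<sigma> \<sigma>'))"
    unfolding Mraw_def comult_sum_list map_map
  proof (simp add: o_def, rule arg_cong[where f=sum_list], rule map_cong[OF refl])
    fix \<gamma> assume "\<gamma> \<in> set (shuffle \<sigma> \<sigma>')"
    then have "set \<gamma> = set \<rho> \<union> set \<rho>'" using shuffle_set s by blast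
    then show "comult_basis (std (\<rho> @ \<rho>', \<gamma>)) = comult_basis (\<rho> @ \<rho>', \<gamma>)"
      by (intro comult_basis_std) (auto simp: valid_def)
  qed
  also have "\<dots> = (\<Sum>\<gamma>\<in>#mset (shuffle \<sigma> \<sigma>'). \<Sum>ab\<in>#mset (cuts \<gamma>). Gc (\<rho> @ \<rho>') ab)"
    by (simp add: sum_list_mset comult_basis_cuts)
  also have "\<dots> = (\<Sum>ab\<in>#CL \<sigma> \<sigma>'. Gc (\<rho> @ \<rho>') ab)"
    unfolding CL_def sum_mset_Union ..
  also have "\<dots> = (\<Sum>ab\<in>#CR \<sigma> \<sigma>'. Gc (\<rho> @ \<rho>') ab)"
    by (simp add: CL_eq_CR)
  also have "\<dots> = (\<Sum>ab\<in>#mset (cuts \<sigma>). \<Sum>cd\<in>#mset (cuts \<sigma>').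
        \<Sum>g\<in>#PS (fst ab) (fst cd) (snd ab) (snd cd). Gc (\<rho> @ \<rho>') g)"
    unfolding CR_def sum_mset_Union ..
  also have "\<dots> = (\<Sum>ab\<in>#mset (cuts \<sigma>). \<Sum>cd\<in>#mset (cuts \<sigma>').
        tmap mult mult (midtw (tensor (Gc \<rho> ab) (Gc \<rho>' cd))))"
  proof (rule sum_mset_cong, rule sum_mset_cong)
    fix ab cd assume "ab \<in># mset (cuts \<sigma>)" "cd \<in># mset (cuts \<sigma>')"
    then have ab: "ab \<in> set (cuts \<sigma>)" and cd: "cd \<in> set (cuts \<sigma>')" by auto
    obtain a b where ab': "ab = (a, b)" by force
    obtain c d where cd': "cd = (c, d)" by force
    have sa: "set a \<subseteq> set \<rho>" "set b \<subseteq> set \<rho>" using cuts_sub[OF ab] s by (auto simp: ab')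
    have sc: "set c \<subseteq> set \<rho>'" "set d \<subseteq> set \<rho>'" using cuts_sub[OF cd] s by (auto simp: cd')
    have key: "Gc (\<rho> @ \<rho>') (g1, g2) =
        (if set a \<inter> set b = {} \<and> set c \<inter> set d = {} then
           frag_of (std (restr \<rho> a @ restr \<rho>' c, g1), std (restr \<rho> b @ restr \<rho>' d, g2)) else 0)"
      if g1: "g1 \<in> set (shuffle a c)" and g2: "g2 \<in> set (shuffle b d)" for g1 g2
    proof -
      have s1: "set g1 = set a \<union> set c" and s2: "set g2 = set b \<union> set d"
        using shuffle_set[OF g1] shuffle_set[OF g2] by auto
      have cond: "set g1 \<inter> set g2 = {} \<longleftrightarrow> set a \<inter> set b = {} \<and> set c \<inter> set d = {}"
        using s1 s2 sa sc dj by blast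
      have "restr \<rho> g1 = restr \<rho> a" by (rule restr_cong) (use s1 sa sc dj in blast)
      moreover have "restr \<rho>' g1 = restr \<rho>' c" by (rule restr_cong) (use s1 sa sc dj in blast)
      ultimately have r1: "restr (\<rho> @ \<rho>') g1 = restr \<rho> a @ restr \<rho>' c"
        unfolding restr_append by simp
      have "restr \<rho> g2 = restr \<rho> b" by (rule restr_cong) (use s2 sa sc dj in blast)
      moreover have "restr \<rho>' g2 = restr \<rho>' d" by (rule restr_cong) (use s2 sa sc dj in blast)
      ultimately have r2: "restr (\<rho> @ \<rho>') g2 = restr \<rho> b @ restr \<rho>' d"
        unfolding restr_append by simp
      show ?thesis unfolding Gc_def using cond r1 r2 by simp
    qed
    show "(\<Sum>g\<in>#PS (fst ab) (fst cd) (snd ab) (snd cd). Gc (\<rho> @ \<rho>') g) =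
        tmap mult mult (midtw (tensor (Gc \<rho> ab) (Gc \<rho>' cd)))"
    proof (cases "set a \<inter> set b = {} \<and> set c \<inter> set d = {}")
      case False
      have "(\<Sum>g\<in>#PS a c b d. Gc (\<rho> @ \<rho>') g) = 0"
        unfolding PS_def sum_mset_Union
        by (rule sum_mset_zero, rule sum_mset_zero) (use key False in auto)
      then show ?thesis using False by (auto simp: ab' cd' Gc_def)
    next
      case True
      have m1: "mult_basis (S \<rho> a) (S \<rho>' c) = Mraw (restr \<rho> a, a) (restr \<rho>' c, c)"
        by (rule mult_basis_raw_std) (use sa sc dj in \<open>auto simp: valid_restr restr_set\<close>)
      have m2: "mult_basis (S \<rho> b) (S \<rho>' d) = Mraw (restr \<rho> b, b) (restr \<rho>' d, d)"
        by (rule mult_basis_raw_std) (use sa sc dj in \<open>auto simp: valid_restr restr_set\<close>)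
      have "tmap mult mult (midtw (tensor (Gc \<rho> ab) (Gc \<rho>' cd))) =
          tensor (Mraw (restr \<rho> a, a) (restr \<rho>' c, c)) (Mraw (restr \<rho> b, b) (restr \<rho>' d, d))"
        using True by (simp add: ab' cd' Gc_def m1 m2)
      also have "\<dots> = sum_list (map (\<lambda>g1. sum_list (map (\<lambda>g2.
            frag_of (std (restr \<rho> a @ restr \<rho>' c, g1), std (restr \<rho> b @ restr \<rho>' d, g2))) (shuffle b d))) (shuffle a c))"
        unfolding Mraw_def tensor_sum_sum by simp
      also have "\<dots> = (\<Sum>g1\<in>#mset (shuffle a c). \<Sum>g2\<in>#mset (shuffle b d).
            frag_of (std (restr \<rho> a @ restr \<rho>' c, g1), std (restr \<rho> b @ restr \<rho>' d, g2)))"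
        by (simp add: sum_list_mset)
      also have "\<dots> = (\<Sum>g1\<in>#mset (shuffle a c). \<Sum>g2\<in>#mset (shuffle b d). Gc (\<rho> @ \<rho>') (g1, g2))"
        by (rule sum_mset_cong, rule sum_mset_cong) (use key True in auto)
      also have "\<dots> = (\<Sum>g\<in>#PS a c b d. Gc (\<rho> @ \<rho>') g)"
        unfolding PS_def sum_mset_Union by simp
      finally show ?thesis by (simp add: ab' cd')
    qed
  qed
  also have "\<dots> = sum_list (map (\<lambda>ab. sum_list (map (\<lambda>cd. tmap mult mult (midtw (tensor (Gc \<rho> ab) (Gc \<rho>' cd)))) (cuts \<sigma>'))) (cuts \<sigma>))"
    by (simp add: sum_list_mset)
  also have "\<dots> = tmap mult mult (midtw (tensor (comult_basis (\<rho>, \<sigma>)) (comult_basis (\<rho>', \<sigma>'))))"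
    unfolding comult_basis_cuts tensor_sum_sum
    by (simp add: midtw_sum_list tmap_sum_list o_def)
  finally show ?thesis .
qed



lemma bialg_basis:
  assumes p: "p \<in> Canon" and q: "q \<in> Canon"
  shows "comult (mult_basis p q) = tmap mult mult (midtw (tensor (comult_basis p) (comult_basis q)))"
proof -
  note M = mult_basis_Canon[OF p q]
  obtain \<rho> \<sigma> where P: "p = (\<rho>, \<sigma>)" by force
  obtain \<rho>' \<sigma>' where Q: "shift (deg p) q = (\<rho>', \<sigma>')" by force
  have cq: "comult_basis q = comult_basis (\<rho>', \<sigma>')"
    using comult_basis_std[OF M(3)] Canon_shift_std[OF q, of "deg p"] unfolding Q by simp
  have e0: "mult_basis p q = Mraw p (\<rho>', \<sigma>')" using M(1) unfolding Q .
  have e: "comult (mult_basis p q) = comult (Mraw (\<rho>, \<sigma>) (\<rho>', \<sigma>'))" using e0 P by simp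
  have v1: "valid (\<rho>, \<sigma>)" using M(2) P by simp
  have v2: "valid (\<rho>', \<sigma>')" using M(3) unfolding Q .
  have d: "set \<rho> \<inter> set \<rho>' = {}" using M(4) unfolding Q by (simp add: P)
  show ?thesis unfolding e cq using bialg_basis_raw[OF v1 v2 d] by (simp add: P)
qed

lemma midtw_fe: "midtw (frag_extend f w) = frag_extend (\<lambda>a. midtw (f a)) w"
  by (simp add: midtw_def frag_extend_frag_extend)

lemma tmap_fe: "tmap F G (frag_extend f w) = frag_extend (\<lambda>a. tmap F G (f a)) w"
  by (simp add: tmap_def frag_extend_frag_extend)

lemma tmap_expand: "tmap F G w = frag_extend (\<lambda>pq. tmap F G (frag_of pq)) w"
  by (simp add: tmap_def)

lemma bialg:
  assumes w: "w \<in> dWHA2"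
  shows "comult (mult w) = tmap mult mult (midtw (tmap comult comult w))"
proof -
  have "comult (mult w) = frag_extend (\<lambda>pq. comult ((\<lambda>(x, y). mult_basis x y) pq)) w"
    unfolding comult_def mult_def frag_extend_frag_extend ..
  also have "\<dots> = frag_extend (\<lambda>pq. comult (mult_basis (fst pq) (snd pq))) w"
    by (simp add: case_prod_beta)
  also have "\<dots> = frag_extend (\<lambda>pq. tmap mult mult (midtw (tensor (comult_basis (fst pq)) (comult_basis (snd pq))))) w"
    by (rule frag_extend_cong_keys) (use w in \<open>auto simp: dWHA2_def bialg_basis subset_iff\<close>)
  also have "\<dots> = tmap mult mult (midtw (tmap comult comult w))"
    unfolding tmap_expand[of comult comult w] midtw_fe tmap_fe
    by (rule frag_extend_cong_keys) (auto simp: case_prod_beta)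
  finally show ?thesis .
qed

lemma lookup_frag_extend:
  "Poly_Mapping.lookup (frag_extend f x) e = (\<Sum>a\<in>Poly_Mapping.keys x. Poly_Mapping.lookup x a * Poly_Mapping.lookup (f a) e)"
  by (simp only: frag_extend_def lookup_sum lookup_frag_cmul)

lemma deg_pos: "p \<in> Canon \<Longrightarrow> p \<noteq> empty_subst \<Longrightarrow> deg p \<noteq> 0"
proof
  assume "p \<in> Canon" "p \<noteq> empty_subst" "deg p = 0"
  then have "p \<in> {p \<in> Canon. deg p = 0}" by simp
  then show False using Canon_deg0 \<open>p \<noteq> empty_subst\<close> by simp
qed

lemma lookup_mult_basis_empty:
  assumes "a \<in> Canon" "b \<in> Canon"
  shows "Poly_Mapping.lookup (mult_basis a b) empty_subst = (if a = empty_subst \<and> b = empty_subst then 1 else 0)"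
proof (cases "a = empty_subst \<and> b = empty_subst")
  case True
  then show ?thesis using mult_basis_unit_left[OF empty_Canon] by simp
next
  case False
  have "empty_subst \<notin> Poly_Mapping.keys (mult_basis a b)"
  proof
    assume "empty_subst \<in> Poly_Mapping.keys (mult_basis a b)"
    then have "deg empty_subst = deg a + deg b" using keys_mult_basis[OF assms] by blast
    then have "deg a = 0" "deg b = 0" using deg_empty by auto
    then show False using False deg_pos[OF assms(1)] deg_pos[OF assms(2)] by blast
  qed
  then show ?thesis using False by (simp add: not_in_keys_iff_lookup_eq_zero)
qed

lemma sum_delta_keys:
  "(\<Sum>b\<in>Poly_Mapping.keys y. Poly_Mapping.lookup y b * (if b = e then c else 0)) = Poly_Mapping.lookup y e * (c::int)"
proof -
  have "(\<Sum>b\<in>Poly_Mapping.keys y. Poly_Mapping.lookup y b * (if b = e then c else 0)) =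
     (\<Sum>b\<in>Poly_Mapping.keys y. if b = e then Poly_Mapping.lookup y b * c else 0)"
    by (rule sum.cong) auto
  also have "\<dots> = (if e \<in> Poly_Mapping.keys y then Poly_Mapping.lookup y e * c else 0)"
    by (rule sum.delta) simp
  also have "\<dots> = Poly_Mapping.lookup y e * c"
    by (simp add: not_in_keys_iff_lookup_eq_zero)
  finally show ?thesis .
qed

lemma counit_mult:
  assumes x: "x \<in> dWHA" and y: "y \<in> dWHA"
  shows "counit (mult (tensor x y)) = counit x * counit y"
proof -
  have "counit (mult (tensor x y)) = (\<Sum>a\<in>Poly_Mapping.keys x. Poly_Mapping.lookup x a *
      (\<Sum>b\<in>Poly_Mapping.keys y. Poly_Mapping.lookup y b * Poly_Mapping.lookup (mult_basis a b) empty_subst))"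
    unfolding counit_def mult_tensor lookup_frag_extend ..
  also have "\<dots> = (\<Sum>a\<in>Poly_Mapping.keys x. Poly_Mapping.lookup x a * (if a = empty_subst then Poly_Mapping.lookup y empty_subst else 0))"
  proof (rule sum.cong[OF refl])
    fix a assume a: "a \<in> Poly_Mapping.keys x"
    then have ac: "a \<in> Canon" using x by (auto simp: dWHA_def)
    have "(\<Sum>b\<in>Poly_Mapping.keys y. Poly_Mapping.lookup y b * Poly_Mapping.lookup (mult_basis a b) empty_subst)
       = (\<Sum>b\<in>Poly_Mapping.keys y. Poly_Mapping.lookup y b * (if b = empty_subst then (if a = empty_subst then 1 else 0) else 0))"
    proof (rule sum.cong[OF refl])
      fix b assume "b \<in> Poly_Mapping.keys y"
      then have bc: "b \<in> Canon" using y by (auto simp: dWHA_def)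
      show "Poly_Mapping.lookup y b * Poly_Mapping.lookup (mult_basis a b) empty_subst =
         Poly_Mapping.lookup y b * (if b = empty_subst then (if a = empty_subst then 1 else 0) else 0)"
        using lookup_mult_basis_empty[OF ac bc] by simp
    qed
    also have "\<dots> = Poly_Mapping.lookup y empty_subst * (if a = empty_subst then 1 else 0)"
      by (rule sum_delta_keys)
    finally show "Poly_Mapping.lookup x a * (\<Sum>b\<in>Poly_Mapping.keys y. Poly_Mapping.lookup y b * Poly_Mapping.lookup (mult_basis a b) empty_subst)
       = Poly_Mapping.lookup x a * (if a = empty_subst then Poly_Mapping.lookup y empty_subst else 0)"
      by simp
  qed
  also have "\<dots> = counit x * counit y"
    unfolding counit_def by (rule sum_delta_keys)
  finally show ?thesis .
qed

lemma comult_unit: "comult (unit 1) = tensor (unit 1) (unit 1)"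
  by (simp add: unit1 comult_basis_def empty_subst_def std_def)

lemma counit_unit: "counit (unit 1) = 1"
  by (simp add: unit1 counit_def)

lemma comult_deg: "p \<in> Canon \<Longrightarrow> \<forall>(a, b)\<in>Poly_Mapping.keys (comult_basis p). deg a + deg b = deg p"
proof
  fix ab assume "p \<in> Canon" "ab \<in> Poly_Mapping.keys (comult_basis p)"
  then have "deg (fst ab) + deg (snd ab) = deg p" using keys_comult_basis Canon_valid by blast
  then show "case ab of (a, b) \<Rightarrow> deg a + deg b = deg p" by (simp add: case_prod_beta)
qed

lemma counit_deg: "p \<in> Canon \<Longrightarrow> counit (frag_of p) \<noteq> 0 \<longrightarrow> deg p = 0"
  by (simp add: counit_of deg_empty)



definition convb :: "(subst \<Rightarrow> subst \<Rightarrow>\<^sub>0 int) \<Rightarrow> (subst \<Rightarrow> subst \<Rightarrow>\<^sub>0 int) \<Rightarrow> subst \<Rightarrow> subst \<Rightarrow>\<^sub>0 int" where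
  "convb f g p = frag_extend (\<lambda>ab. mult (tensor (f (fst ab)) (g (snd ab)))) (comult_basis p)"

definition eb :: "subst \<Rightarrow> subst \<Rightarrow>\<^sub>0 int" where
  "eb p = unit (counit (frag_of p))"

lemma eb_eq: "eb p = (if p = empty_subst then frag_of empty_subst else 0)"
  by (simp add: eb_def unit_def counit_of)

lemma mult_0[simp]: "mult 0 = 0"
  by (simp add: mult_def)

lemma mult_fe: "mult (frag_extend f z) = frag_extend (\<lambda>a. mult (f a)) z"
  by (simp add: mult_def frag_extend_frag_extend)

lemma mult_tensor_fe1: "mult (tensor (frag_extend \<phi> z) y) = frag_extend (\<lambda>c. mult (tensor (\<phi> c) y)) z"
  by (simp add: tensor_frag_extend1 mult_fe)

lemma mult_tensor_fe2: "mult (tensor y (frag_extend \<phi> z)) = frag_extend (\<lambda>c. mult (tensor y (\<phi> c))) z"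
  by (simp add: tensor_frag_extend2 mult_fe)

lemma keys_comult_Canon:
  assumes "p \<in> Canon" "ab \<in> Poly_Mapping.keys (comult_basis p)"
  shows "fst ab \<in> Canon" "snd ab \<in> Canon" "deg (fst ab) + deg (snd ab) = deg p"
  using keys_comult_basis[OF Canon_valid[OF assms(1)] assms(2)] by auto

lemma fe_rcounit:
  "frag_extend (\<lambda>ab. if snd ab = empty_subst then \<phi> (fst ab) else 0) z = frag_extend \<phi> (rcounit z)"
  unfolding rcounit_def frag_extend_frag_extend
  by (rule frag_extend_cong_keys) (auto simp: counit_of)

lemma fe_lcounit:
  "frag_extend (\<lambda>ab. if fst ab = empty_subst then \<phi> (snd ab) else 0) z = frag_extend \<phi> (lcounit z)"
  unfolding lcounit_def frag_extend_frag_extend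
  by (rule frag_extend_cong_keys) (auto simp: counit_of)

lemma fe_split:
  "frag_extend f z = frag_extend (\<lambda>ab. if P ab then f ab else 0) z + frag_extend (\<lambda>ab. if P ab then 0 else f ab) z"
  unfolding frag_extend_add_fun[symmetric] by (rule frag_extend_cong_keys) auto

lemma in_dWHA_keys: "x \<in> dWHA \<longleftrightarrow> Poly_Mapping.keys x \<subseteq> Canon"
  by (simp add: dWHA_def)

lemma convb_unit_right:
  assumes p: "p \<in> Canon" and f: "f p \<in> dWHA"
  shows "convb f eb p = f p"
proof -
  have "convb f eb p = frag_extend (\<lambda>ab. if snd ab = empty_subst then mult (tensor (f (fst ab)) (frag_of empty_subst)) else 0) (comult_basis p)"
    unfolding convb_def by (rule frag_extend_cong_keys) (auto simp: eb_eq)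
  also have "\<dots> = mult (tensor (f p) (frag_of empty_subst))"
    using fe_rcounit[of "\<lambda>a. mult (tensor (f a) (frag_of empty_subst))" "comult_basis p"]
      rcounit_basis[OF Canon_valid[OF p]] Canon_std[OF p] by simp
  also have "\<dots> = f p" using mult_unit_right[OF f] by (simp add: unit1)
  finally show ?thesis .
qed

lemma convb_unit_left:
  assumes p: "p \<in> Canon" and f: "f p \<in> dWHA"
  shows "convb eb f p = f p"
proof -
  have "convb eb f p = frag_extend (\<lambda>ab. if fst ab = empty_subst then mult (tensor (frag_of empty_subst) (f (snd ab))) else 0) (comult_basis p)"
    unfolding convb_def by (rule frag_extend_cong_keys) (auto simp: eb_eq)
  also have "\<dots> = mult (tensor (frag_of empty_subst) (f p))"
    using fe_lcounit[of "\<lambda>a. mult (tensor (frag_of empty_subst) (f a))" "comult_basis p"]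
      lcounit_basis[OF Canon_valid[OF p]] Canon_std[OF p] by simp
  also have "\<dots> = f p" using mult_unit_left[OF f] by (simp add: unit1)
  finally show ?thesis .
qed

lemma convb_cong:
  assumes p: "p \<in> Canon" and fg: "\<And>q. q \<in> Canon \<Longrightarrow> f q = f' q" "\<And>q. q \<in> Canon \<Longrightarrow> g q = g' q"
  shows "convb f g p = convb f' g' p"
  unfolding convb_def
  by (rule frag_extend_cong_keys) (use keys_comult_Canon[OF p] fg in auto)

lemma convb_closed:
  assumes p: "p \<in> Canon" and f: "\<And>q. q \<in> Canon \<Longrightarrow> f q \<in> dWHA" and g: "\<And>q. q \<in> Canon \<Longrightarrow> g q \<in> dWHA"
  shows "convb f g p \<in> dWHA"
  unfolding convb_def in_dWHA_keys
  by (rule frag_extend_keys_sub) (use keys_comult_Canon[OF p] f g mult_closed in \<open>auto simp: in_dWHA_keys[symmetric]\<close>)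

lemma tassoc_tmap_fe:
  "frag_extend \<Psi> (tassoc (tmap comult id z)) =
   frag_extend (\<lambda>ab. frag_extend (\<lambda>cd. \<Psi> (fst cd, snd cd, snd ab)) (comult_basis (fst ab))) z"
  unfolding tassoc_def tmap_def frag_extend_frag_extend
  by (simp add: case_prod_beta tensor_frag_of2 frag_extend_frag_extend)

lemma tmap_id_fe:
  "frag_extend \<Psi> (tmap id comult z) =
   frag_extend (\<lambda>ab. frag_extend (\<lambda>cd. \<Psi> (fst ab, fst cd, snd cd)) (comult_basis (snd ab))) z"
  unfolding tmap_def frag_extend_frag_extend
  by (simp add: case_prod_beta tensor_frag_of1 frag_extend_frag_extend)

lemma convb_assoc:
  assumes p: "p \<in> Canon"
    and f: "\<And>q. q \<in> Canon \<Longrightarrow> f q \<in> dWHA" and g: "\<And>q. q \<in> Canon \<Longrightarrow> g q \<in> dWHA"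
    and h: "\<And>q. q \<in> Canon \<Longrightarrow> h q \<in> dWHA"
  shows "convb (convb f g) h p = convb f (convb g h) p"
proof -
  define \<Psi> where "\<Psi> t = mult (tensor (f (fst t)) (mult (tensor (g (fst (snd t))) (h (snd (snd t))))))" for t
  have "convb (convb f g) h p =
      frag_extend (\<lambda>ab. frag_extend (\<lambda>cd. \<Psi> (fst cd, snd cd, snd ab)) (comult_basis (fst ab))) (comult_basis p)"
    unfolding convb_def
  proof (rule frag_extend_cong_keys)
    fix ab assume ab: "ab \<in> Poly_Mapping.keys (comult_basis p)"
    note k = keys_comult_Canon[OF p ab]
    show "mult (tensor (frag_extend (\<lambda>ab. mult (tensor (f (fst ab)) (g (snd ab)))) (comult_basis (fst ab))) (h (snd ab))) =
        frag_extend (\<lambda>cd. \<Psi> (fst cd, snd cd, snd ab)) (comult_basis (fst ab))"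
      unfolding mult_tensor_fe1
      by (rule frag_extend_cong_keys) (use keys_comult_Canon[OF k(1)] k f g h in \<open>auto simp: \<Psi>_def mult_assoc\<close>)
  qed
  also have "\<dots> = frag_extend \<Psi> (tassoc (tmap comult id (comult_basis p)))"
    by (simp add: tassoc_tmap_fe)
  also have "\<dots> = frag_extend \<Psi> (tmap id comult (comult_basis p))"
    by (simp add: coassoc_basis Canon_valid[OF p])
  also have "\<dots> = frag_extend (\<lambda>ab. frag_extend (\<lambda>cd. \<Psi> (fst ab, fst cd, snd cd)) (comult_basis (snd ab))) (comult_basis p)"
    by (simp add: tmap_id_fe)
  also have "\<dots> = convb f (convb g h) p"
    unfolding convb_def
  proof (rule frag_extend_cong_keys)
    fix ab assume ab: "ab \<in> Poly_Mapping.keys (comult_basis p)"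
    note k = keys_comult_Canon[OF p ab]
    show "frag_extend (\<lambda>cd. \<Psi> (fst ab, fst cd, snd cd)) (comult_basis (snd ab)) =
        mult (tensor (f (fst ab)) (frag_extend (\<lambda>ab. mult (tensor (g (fst ab)) (h (snd ab)))) (comult_basis (snd ab))))"
      unfolding mult_tensor_fe2
      by (rule frag_extend_cong_keys) (use keys_comult_Canon[OF k(2)] k f g h in \<open>auto simp: \<Psi>_def\<close>)
  qed
  finally show ?thesis .
qed



section \<open>Antipode\<close>

primrec antL :: "nat \<Rightarrow> subst \<Rightarrow> subst \<Rightarrow>\<^sub>0 int" where
  "antL 0 p = 0"
| "antL (Suc n) p = eb p - frag_extend (\<lambda>ab. if snd ab = empty_subst then 0
      else mult (tensor (antL n (fst ab)) (frag_of (snd ab)))) (comult_basis p)"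

primrec antR :: "nat \<Rightarrow> subst \<Rightarrow> subst \<Rightarrow>\<^sub>0 int" where
  "antR 0 p = 0"
| "antR (Suc n) p = eb p - frag_extend (\<lambda>ab. if fst ab = empty_subst then 0
      else mult (tensor (frag_of (fst ab)) (antR n (snd ab)))) (comult_basis p)"

lemma eb_closed: "eb p \<in> dWHA"
  by (simp add: eb_eq in_dWHA_keys keys_frag_of empty_Canon)

lemma diff_closed: "x \<in> dWHA \<Longrightarrow> y \<in> dWHA \<Longrightarrow> x - y \<in> dWHA"
  using keys_diff[of x y] by (auto simp: in_dWHA_keys)

lemma frag_of_closed: "p \<in> Canon \<Longrightarrow> frag_of p \<in> dWHA"
  by (simp add: in_dWHA_keys keys_frag_of)

lemma zero_closed: "0 \<in> dWHA"
  by (simp add: in_dWHA_keys)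

lemma antL_closed: "p \<in> Canon \<Longrightarrow> antL n p \<in> dWHA"
proof (induction n arbitrary: p)
  case 0 then show ?case by (simp add: zero_closed)
next
  case (Suc n)
  show ?case unfolding antL.simps
  proof (rule diff_closed[OF eb_closed])
    show "frag_extend (\<lambda>ab. if snd ab = empty_subst then 0 else mult (tensor (antL n (fst ab)) (frag_of (snd ab)))) (comult_basis p) \<in> dWHA"
      unfolding in_dWHA_keys
      by (rule frag_extend_keys_sub)
         (use keys_comult_Canon[OF Suc.prems] Suc.IH mult_closed frag_of_closed zero_closed in \<open>auto simp: in_dWHA_keys[symmetric]\<close>)
  qed
qed

lemma antR_closed: "p \<in> Canon \<Longrightarrow> antR n p \<in> dWHA"
proof (induction n arbitrary: p)
  case 0 then show ?case by (simp add: zero_closed)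
next
  case (Suc n)
  show ?case unfolding antR.simps
  proof (rule diff_closed[OF eb_closed])
    show "frag_extend (\<lambda>ab. if fst ab = empty_subst then 0 else mult (tensor (frag_of (fst ab)) (antR n (snd ab)))) (comult_basis p) \<in> dWHA"
      unfolding in_dWHA_keys
      by (rule frag_extend_keys_sub)
         (use keys_comult_Canon[OF Suc.prems] Suc.IH mult_closed frag_of_closed zero_closed in \<open>auto simp: in_dWHA_keys[symmetric]\<close>)
  qed
qed

lemma antL_stable: "p \<in> Canon \<Longrightarrow> deg p < m \<Longrightarrow> deg p < n \<Longrightarrow> antL m p = antL n p"
proof (induction m arbitrary: n p)
  case 0 then show ?case by simp
next
  case (Suc m)
  then obtain n' where n: "n = Suc n'" by (cases n) auto
  show ?case unfolding n antL.simps
  proof (rule arg_cong[where f="\<lambda>z. eb p - z"], rule frag_extend_cong_keys)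
    fix ab assume ab: "ab \<in> Poly_Mapping.keys (comult_basis p)"
    note k = keys_comult_Canon[OF Suc.prems(1) ab]
    show "(if snd ab = empty_subst then 0 else mult (tensor (antL m (fst ab)) (frag_of (snd ab)))) =
          (if snd ab = empty_subst then 0 else mult (tensor (antL n' (fst ab)) (frag_of (snd ab))))"
    proof (cases "snd ab = empty_subst")
      case False
      then have "deg (snd ab) \<noteq> 0" using deg_pos k(2) by blast
      then have "deg (fst ab) < m" "deg (fst ab) < n'" using k(3) Suc.prems n by auto
      then have "antL m (fst ab) = antL n' (fst ab)" using Suc.IH[OF k(1)] by blast
      then show ?thesis by simp
    qed simp
  qed
qed

lemma antR_stable: "p \<in> Canon \<Longrightarrow> deg p < m \<Longrightarrow> deg p < n \<Longrightarrow> antR m p = antR n p"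
proof (induction m arbitrary: n p)
  case 0 then show ?case by simp
next
  case (Suc m)
  then obtain n' where n: "n = Suc n'" by (cases n) auto
  show ?case unfolding n antR.simps
  proof (rule arg_cong[where f="\<lambda>z. eb p - z"], rule frag_extend_cong_keys)
    fix ab assume ab: "ab \<in> Poly_Mapping.keys (comult_basis p)"
    note k = keys_comult_Canon[OF Suc.prems(1) ab]
    show "(if fst ab = empty_subst then 0 else mult (tensor (frag_of (fst ab)) (antR m (snd ab)))) =
          (if fst ab = empty_subst then 0 else mult (tensor (frag_of (fst ab)) (antR n' (snd ab))))"
    proof (cases "fst ab = empty_subst")
      case False
      then have "deg (fst ab) \<noteq> 0" using deg_pos k(1) by blast
      then have "deg (snd ab) < m" "deg (snd ab) < n'" using k(3) Suc.prems n by auto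
      then have "antR m (snd ab) = antR n' (snd ab)" using Suc.IH[OF k(2)] by blast
      then show ?thesis by simp
    qed simp
  qed
qed

definition SL :: "subst \<Rightarrow> subst \<Rightarrow>\<^sub>0 int" where
  "SL p = (if p \<in> Canon then antL (Suc (deg p)) p else 0)"

definition SR :: "subst \<Rightarrow> subst \<Rightarrow>\<^sub>0 int" where
  "SR p = (if p \<in> Canon then antR (Suc (deg p)) p else 0)"

lemma SL_closed: "SL p \<in> dWHA"
  using antL_closed[of p "Suc (deg p)"] by (simp add: SL_def zero_closed del: antL.simps)

lemma SR_closed: "SR p \<in> dWHA"
  using antR_closed[of p "Suc (deg p)"] by (simp add: SR_def zero_closed del: antR.simps)

lemma SL_left:
  assumes p: "p \<in> Canon"
  shows "convb SL frag_of p = eb p"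
proof -
  define R where "R = frag_extend (\<lambda>ab. if snd ab = empty_subst then 0
      else mult (tensor (antL (deg p) (fst ab)) (frag_of (snd ab)))) (comult_basis p)"
  have SLp: "SL p = eb p - R" by (simp add: SL_def p R_def)
  have "convb SL frag_of p =
      frag_extend (\<lambda>ab. if snd ab = empty_subst then mult (tensor (SL (fst ab)) (frag_of empty_subst)) else 0) (comult_basis p)
    + frag_extend (\<lambda>ab. if snd ab = empty_subst then 0 else mult (tensor (SL (fst ab)) (frag_of (snd ab)))) (comult_basis p)"
    unfolding convb_def
    by (subst fe_split[where P="\<lambda>ab. snd ab = empty_subst"])
       (intro arg_cong2[where f="(+)"] frag_extend_cong_keys; auto)
  also have "frag_extend (\<lambda>ab. if snd ab = empty_subst then mult (tensor (SL (fst ab)) (frag_of empty_subst)) else 0) (comult_basis p)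
      = SL p"
    using fe_rcounit[of "\<lambda>a. mult (tensor (SL a) (frag_of empty_subst))" "comult_basis p"]
      rcounit_basis[OF Canon_valid[OF p]] Canon_std[OF p] mult_unit_right[OF SL_closed] by (simp add: unit1)
  also have "frag_extend (\<lambda>ab. if snd ab = empty_subst then 0 else mult (tensor (SL (fst ab)) (frag_of (snd ab)))) (comult_basis p)
      = R"
    unfolding R_def
  proof (rule frag_extend_cong_keys)
    fix ab assume ab: "ab \<in> Poly_Mapping.keys (comult_basis p)"
    note k = keys_comult_Canon[OF p ab]
    show "(if snd ab = empty_subst then 0 else mult (tensor (SL (fst ab)) (frag_of (snd ab)))) =
        (if snd ab = empty_subst then 0 else mult (tensor (antL (deg p) (fst ab)) (frag_of (snd ab))))"
    proof (cases "snd ab = empty_subst")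
      case False
      then have "deg (snd ab) \<noteq> 0" using deg_pos k(2) by blast
      then have "deg (fst ab) < deg p" using k(3) by auto
      then have "SL (fst ab) = antL (deg p) (fst ab)"
        using antL_stable[OF k(1), of "Suc (deg (fst ab))" "deg p"] k(1) by (simp add: SL_def)
      then show ?thesis by simp
    qed simp
  qed
  finally show ?thesis using SLp by simp
qed

lemma SR_right:
  assumes p: "p \<in> Canon"
  shows "convb frag_of SR p = eb p"
proof -
  define R where "R = frag_extend (\<lambda>ab. if fst ab = empty_subst then 0
      else mult (tensor (frag_of (fst ab)) (antR (deg p) (snd ab)))) (comult_basis p)"
  have SRp: "SR p = eb p - R" by (simp add: SR_def p R_def)
  have "convb frag_of SR p =
      frag_extend (\<lambda>ab. if fst ab = empty_subst then mult (tensor (frag_of empty_subst) (SR (snd ab))) else 0) (comult_basis p)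
    + frag_extend (\<lambda>ab. if fst ab = empty_subst then 0 else mult (tensor (frag_of (fst ab)) (SR (snd ab)))) (comult_basis p)"
    unfolding convb_def
    by (subst fe_split[where P="\<lambda>ab. fst ab = empty_subst"])
       (intro arg_cong2[where f="(+)"] frag_extend_cong_keys; auto)
  also have "frag_extend (\<lambda>ab. if fst ab = empty_subst then mult (tensor (frag_of empty_subst) (SR (snd ab))) else 0) (comult_basis p)
      = SR p"
    using fe_lcounit[of "\<lambda>a. mult (tensor (frag_of empty_subst) (SR a))" "comult_basis p"]
      lcounit_basis[OF Canon_valid[OF p]] Canon_std[OF p] mult_unit_left[OF SR_closed] by (simp add: unit1)
  also have "frag_extend (\<lambda>ab. if fst ab = empty_subst then 0 else mult (tensor (frag_of (fst ab)) (SR (snd ab)))) (comult_basis p)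
      = R"
    unfolding R_def
  proof (rule frag_extend_cong_keys)
    fix ab assume ab: "ab \<in> Poly_Mapping.keys (comult_basis p)"
    note k = keys_comult_Canon[OF p ab]
    show "(if fst ab = empty_subst then 0 else mult (tensor (frag_of (fst ab)) (SR (snd ab)))) =
        (if fst ab = empty_subst then 0 else mult (tensor (frag_of (fst ab)) (antR (deg p) (snd ab))))"
    proof (cases "fst ab = empty_subst")
      case False
      then have "deg (fst ab) \<noteq> 0" using deg_pos k(1) by blast
      then have "deg (snd ab) < deg p" using k(3) by auto
      then have "SR (snd ab) = antR (deg p) (snd ab)"
        using antR_stable[OF k(2), of "Suc (deg (snd ab))" "deg p"] k(2) by (simp add: SR_def)
      then show ?thesis by simp
    qed simp
  qed
  finally show ?thesis using SRp by simp
qed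

lemma SL_eq_SR:
  assumes p: "p \<in> Canon"
  shows "SL p = SR p"
proof -
  have cl: "\<And>q. q \<in> Canon \<Longrightarrow> SL q \<in> dWHA" "\<And>q. q \<in> Canon \<Longrightarrow> SR q \<in> dWHA"
    "\<And>q. q \<in> Canon \<Longrightarrow> frag_of q \<in> dWHA"
    by (auto simp: SL_closed SR_closed frag_of_closed)
  have "SL p = convb SL eb p" using convb_unit_right[OF p SL_closed] by simp
  also have "\<dots> = convb SL (convb frag_of SR) p"
    by (rule convb_cong[OF p]) (auto simp: SR_right)
  also have "\<dots> = convb (convb SL frag_of) SR p"
    by (rule convb_assoc[symmetric, OF p cl(1) cl(3) cl(2)])
  also have "\<dots> = convb eb SR p"
    by (rule convb_cong[OF p]) (auto simp: SL_left)
  also have "\<dots> = SR p" using convb_unit_left[OF p SR_closed] .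
  finally show ?thesis .
qed

lemma SL_right:
  assumes p: "p \<in> Canon"
  shows "convb frag_of SL p = eb p"
proof -
  have "convb frag_of SL p = convb frag_of SR p"
    by (rule convb_cong[OF p]) (auto simp: SL_eq_SR)
  then show ?thesis using SR_right[OF p] by simp
qed

lemma unit_counit_fe: "unit (counit x) = frag_extend eb x"
proof (induction x rule: frag_ind)
  case zero then show ?case by (simp add: unit_def counit_def)
next
  case (one x) then show ?case by (simp add: eb_def)
next
  case (diff a b)
  then show ?case by (simp add: frag_extend_diff unit_def counit_def lookup_minus frag_cmul_diff_distrib)
qed

lemma antipode_exists:
  "\<exists>s. (\<forall>p. Poly_Mapping.keys (s p) \<subseteq> Canon) \<and>
       (\<forall>x\<in>dWHA. mult (tmap (frag_extend s) id (comult x)) = unit (counit x) \<and>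
                  mult (tmap id (frag_extend s) (comult x)) = unit (counit x))"
proof (intro exI conjI allI ballI)
  show "Poly_Mapping.keys (SL p) \<subseteq> Canon" for p using SL_closed by (simp add: in_dWHA_keys)
next
  fix x assume x: "x \<in> dWHA"
  have e1: "mult (tmap (frag_extend SL) id (comult x)) = frag_extend (convb SL frag_of) x"
    unfolding comult_def tmap_fe mult_fe convb_def
    by (simp add: tmap_def mult_fe case_prod_beta)
  have e2: "mult (tmap id (frag_extend SL) (comult x)) = frag_extend (convb frag_of SL) x"
    unfolding comult_def tmap_fe mult_fe convb_def
    by (simp add: tmap_def mult_fe case_prod_beta)
  show "mult (tmap (frag_extend SL) id (comult x)) = unit (counit x)"
    unfolding e1 unit_counit_fe
    by (rule frag_extend_cong_keys) (use x SL_left in \<open>auto simp: in_dWHA_keys\<close>)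
  show "mult (tmap id (frag_extend SL) (comult x)) = unit (counit x)"
    unfolding e2 unit_counit_fe
    by (rule frag_extend_cong_keys) (use x SL_right in \<open>auto simp: in_dWHA_keys\<close>)
qed


theorem theorem7p8:
  shows "(empty_subst \<in> Canon)
   \<and> (\<forall>x\<in>dWHA. \<forall>y\<in>dWHA. mult (tensor x y) \<in> dWHA)
   \<and> (\<forall>x\<in>dWHA. comult x \<in> dWHA2)
   \<and> (\<forall>x\<in>dWHA. \<forall>y\<in>dWHA. \<forall>z\<in>dWHA.
       mult (tensor (mult (tensor x y)) z) = mult (tensor x (mult (tensor y z))))
   \<and> (\<forall>x\<in>dWHA. mult (tensor (unit 1) x) = x \<and> mult (tensor x (unit 1)) = x)
   \<and> (\<forall>x\<in>dWHA. tassoc (tmap comult id (comult x)) = tmap id comult (comult x))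
   \<and> (\<forall>x\<in>dWHA. lcounit (comult x) = x \<and> rcounit (comult x) = x)
   \<and> (\<forall>w\<in>dWHA2. comult (mult w) = tmap mult mult (midtw (tmap comult comult w)))
   \<and> (\<forall>x\<in>dWHA. \<forall>y\<in>dWHA. counit (mult (tensor x y)) = counit x * counit y)
   \<and> (comult (unit 1) = tensor (unit 1) (unit 1))
   \<and> (counit (unit 1) = 1)
   \<and> (\<forall>p\<in>Canon. \<forall>q\<in>Canon. \<forall>r\<in>Poly_Mapping.keys (mult_basis p q). deg r = deg p + deg q)
   \<and> (\<forall>p\<in>Canon. \<forall>(a, b)\<in>Poly_Mapping.keys (comult_basis p). deg a + deg b = deg p)
   \<and> (deg empty_subst = 0)
   \<and> (\<forall>p\<in>Canon. counit (frag_of p) \<noteq> 0 \<longrightarrow> deg p = 0)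
   \<and> ({p \<in> Canon. deg p = 0} = {empty_subst})
   \<and> (\<exists>s. (\<forall>p. Poly_Mapping.keys (s p) \<subseteq> Canon) \<and>
       (\<forall>x\<in>dWHA. mult (tmap (frag_extend s) id (comult x)) = unit (counit x) \<and>
                  mult (tmap id (frag_extend s) (comult x)) = unit (counit x)))"
    apply (intro conjI)
  subgoal by (rule empty_Canon)
  subgoal using mult_closed by blast
  subgoal using comult_closed by blast
  subgoal using mult_assoc by blast
  subgoal using mult_unit_left mult_unit_right by blast
  subgoal using coassoc by blast
  subgoal using counit_laws by blast
  subgoal using bialg by blast
  subgoal using counit_mult by blast
  subgoal by (rule comult_unit)
  subgoal by (rule counit_unit)
  subgoal using keys_mult_basis by blast
  subgoal using comult_deg by blast
  subgoal by (rule deg_empty)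
  subgoal using counit_deg by blast
  subgoal by (rule Canon_deg0)
  subgoal by (rule antipode_exists)
  done

end
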